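(* Let $P_Z$ be a distribution on $\mathcal{Z}$, let $S=(Z_1,\ldots,Z_n)$ consist of $n$ i.i.d. samples from $P_Z$, and let $W\in\mathcal{W}$ be produced by a conditional distribution $P_{W|S}$. Let $\ell:\mathcal{W}\times\mathcal{Z}\to\mathbb{R}$ be a loss function such that $(\mathcal{W},\rho)$ is a Polish metric space, $w\mapsto\ell(w,z)$ is $L$-Lipschitz under $\rho$ for every $z\in\mathcal{Z}$, and $\ell$ takes values in $[a,b]$. Then $$\big|\overline{\mathrm{gen}}(W,S)\big| \le \frac{b-a}{n}\sum_{i=1}^n \mathbb{E}\big[\mathrm{TV}(P_{W|Z_i},P_W)\big] \le \frac{b-a}{n}\sum_{i=1}^n \mathbb{E}\big[\Psi\big(D(P_{W|Z_i}\,\|\,P_W)\big)\big].$$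
   Context: Population risk $\mathscr{L}_{P_Z}(w)=\mathbb{E}[\ell(w,Z)]$, $Z\sim P_Z$; empirical risk $\mathscr{L}_s(w)=\frac1n\sum_{i=1}^n\ell(w,z_i)$; $\overline{\mathrm{gen}}(W,S)=\mathbb{E}[\mathscr{L}_{P_Z}(W)-\mathscr{L}_S(W)]$. $P_W$ is the marginal of $W$, $P_{W|Z_i}$ the conditional law of $W$ given $Z_i$, expectations in the bound are over $Z_i$. $L$-Lipschitz under $\rho$ means $|f(x)-f(y)|\le L\rho(x,y)$. $\mathrm{TV}(P,Q)=\sup_{A}\{P(A)-Q(A)\}$ over measurable sets $A$; $D(P\|Q)$ is the relative entropy (KL divergence); $\Psi(x)=\sqrt{\min\{x/2,\,1-e^{-x}\}}$. *)

theory Defs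
  imports "HOL-Probability.Probability"
begin

definition tv_dist :: "'a measure \<Rightarrow> 'a measure \<Rightarrow> real" where
  "tv_dist P Q = (SUP A \<in> sets P. measure P A - measure Q A)"

definition rel_entropy :: "'a measure \<Rightarrow> 'a measure \<Rightarrow> ereal" where
  "rel_entropy P Q =
     (if absolutely_continuous Q P \<and> integrable P (entropy_density (exp 1) Q P)
      then ereal (KL_divergence (exp 1) Q P) else \<infinity>)"

definition Psi :: "ereal \<Rightarrow> real" where
  "Psi x = (if x = \<infinity> then 1
            else sqrt (min (real_of_ereal x / 2) (1 - exp (- real_of_ereal x))))"

definition pop_risk :: "('w \<Rightarrow> 'z \<Rightarrow> real) \<Rightarrow> 'z measure \<Rightarrow> 'w \<Rightarrow> real" where
  "pop_risk loss PZ w = (\<integral>z. loss w z \<partial>PZ)"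

definition emp_risk :: "('w \<Rightarrow> 'z \<Rightarrow> real) \<Rightarrow> nat \<Rightarrow> (nat \<Rightarrow> 'z) \<Rightarrow> 'w \<Rightarrow> real" where
  "emp_risk loss n s w = (\<Sum>i<n. loss w (s i)) / real n"

definition exp_gen :: "('w \<Rightarrow> 'z \<Rightarrow> real) \<Rightarrow> 'z measure \<Rightarrow> nat \<Rightarrow> ((nat \<Rightarrow> 'z) \<Rightarrow> 'w measure) \<Rightarrow> real" where
  "exp_gen loss PZ n K =
     (\<integral>s. (\<integral>w. pop_risk loss PZ w - emp_risk loss n s w \<partial>K s) \<partial>(PiM {..<n} (\<lambda>_. PZ)))"

end

theory Submission
  imports Defs
begin

lemma lin_aux: "(L::real) \<ge> 2*m \<Longrightarrow> S = -T \<Longrightarrow> U = T/2 \<Longrightarrow> U \<le> m \<Longrightarrow> -L \<le> S"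
  by linarith

lemma bh_aux:
  fixes p q :: real
  assumes q0: "0 < q" and qp: "q < p" and p1: "p < 1"
  shows "- ln (1 - (p - q)^2) \<le> p * ln (p/q) + (1-p) * ln ((1-p)/(1-q))"
proof -
  define uu where "uu = sqrt (q/p)"
  define vv where "vv = sqrt ((1-q)/(1-p))"
  have p0: "p > 0" using q0 qp by simp
  have u0: "uu > 0" using q0 p0 by (simp add: uu_def)
  have v0: "vv > 0" using qp p1 by (simp add: vv_def)
  define mm where "mm = p*uu + (1-p) * vv"
  have m0: "mm > 0" unfolding mm_def using u0 v0 p0 p1 by (intro add_pos_pos) auto
  have 1: "ln uu - ln mm \<le> uu/mm - 1"
    using ln_le_minus_one[of "uu/mm"] u0 m0 by (simp add: ln_div)
  have 2: "ln vv - ln mm \<le> vv/mm - 1"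
    using ln_le_minus_one[of "vv/mm"] v0 m0 by (simp add: ln_div)
  have "p * (ln uu - ln mm) + (1-p) * (ln vv - ln mm) \<le> p * (uu/mm - 1) + (1-p) * (vv/mm - 1)"
    using 1 2 p0 p1 by (intro add_mono mult_left_mono) auto
  also have "\<dots> = (p*uu + (1-p) * vv)/mm - 1" using m0 by (simp add: field_simps)
  also have "\<dots> = mm/mm - 1" by (simp add: mm_def)
  finally have 3: "p * ln uu + (1-p) * ln vv \<le> ln mm" using m0 by (simp add: algebra_simps)
  have lu: "ln uu = ln (q/p) / 2" unfolding uu_def using q0 p0 by (simp add: ln_sqrt)
  have lv: "ln vv = ln ((1-q)/(1-p)) / 2" unfolding vv_def using qp p1 by (simp add: ln_sqrt)
  have e1: "p * uu = sqrt (p*q)"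
  proof -
    have "p*p*(q/p) = p*q" using p0 by (simp add: field_simps)
    hence "sqrt (p*q) = sqrt (p*p) * uu" unfolding uu_def by (metis real_sqrt_mult)
    moreover have "sqrt (p*p) = p" using p0 by (simp add: real_sqrt_mult_self)
    ultimately show ?thesis by simp
  qed
  have e2: "(1-p) * vv = sqrt ((1-p)*(1-q))"
  proof -
    have "(1-p)*(1-p)*((1-q)/(1-p)) = (1-p)*(1-q)" using p1 by (simp add: field_simps)
    hence "sqrt ((1-p)*(1-q)) = sqrt ((1-p)*(1-p)) * vv" unfolding vv_def by (metis real_sqrt_mult)
    moreover have "sqrt ((1-p)*(1-p)) = 1-p" using p1 by (simp add: real_sqrt_mult_self)
    ultimately show ?thesis by simp
  qed
  define X where "X = sqrt (q*(1-q))"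
  define Y where "Y = sqrt (p*(1-p))"
  have X2: "X^2 = q*(1-q)" unfolding X_def using q0 qp p1 by simp
  have Y2: "Y^2 = p*(1-p)" unfolding Y_def using p0 p1 by simp
  have XY: "sqrt (p*q) * sqrt ((1-p)*(1-q)) = X * Y"
    unfolding X_def Y_def by (simp add: real_sqrt_mult[symmetric] algebra_simps)
  have s1: "(sqrt (p*q))^2 = p*q" using p0 q0 by simp
  have s2: "(sqrt ((1-p)*(1-q)))^2 = (1-p)*(1-q)" using p1 qp by simp
  have "mm^2 = (sqrt (p*q))^2 + (sqrt ((1-p)*(1-q)))^2 + 2 * (sqrt (p*q) * sqrt ((1-p)*(1-q)))"
    unfolding mm_def e1 e2 by (simp add: power2_eq_square algebra_simps)
  also have "\<dots> = p*q + (1-p)*(1-q) + 2*(X*Y)" using s1 s2 XY by simp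
  also have "\<dots> \<le> p*q + (1-p)*(1-q) + (X^2 + Y^2)"
    using sum_squares_bound[of X Y] by (simp add: algebra_simps)
  also have "\<dots> = 1 - (p-q)^2" unfolding X2 Y2 by (simp add: power2_eq_square algebra_simps)
  finally have m2: "mm^2 \<le> 1 - (p-q)^2" .
  have "ln (mm^2) \<le> ln (1 - (p-q)^2)"
    using m2 m0 by (intro ln_mono) auto
  hence "2 * ln mm \<le> ln (1 - (p-q)^2)" using m0 by (simp add: ln_realpow)
  moreover have "p * ln (p/q) + (1-p) * ln ((1-p)/(1-q)) = - (p * ln (q/p) + (1-p) * ln ((1-q)/(1-p)))"
  proof -
    have "ln (p/q) = - ln (q/p)" using p0 q0 by (simp add: ln_div)
    moreover have "ln ((1-p)/(1-q)) = - ln ((1-q)/(1-p))" using p1 qp by (simp add: ln_div)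
    ultimately show ?thesis by (simp add: algebra_simps)
  qed
  moreover have "p * ln uu + (1-p) * ln vv = (p * ln (q/p) + (1-p) * ln ((1-q)/(1-p)))/2"
    by (simp add: lu lv field_simps)
  ultimately show ?thesis using 3
    by (metis (no_types) lin_aux)
qed

definition dv :: "'a measure \<Rightarrow> 'a measure \<Rightarrow> ('a \<Rightarrow> real) \<Rightarrow> real" where
  "dv P Q g = (\<integral>x. g x \<partial>P) - ln (\<integral>x. exp (g x) \<partial>Q)"

lemma entropy_density_exp1: "entropy_density (exp 1) M N = (\<lambda>x. ln (enn2real (RN_deriv M N x)))"
  by (simp add: entropy_density_def log_def fun_eq_iff)

lemma gibbs:
  assumes P: "prob_space P" and Q: "prob_space Q" and sets_eq: "sets P = sets Q"
    and g[measurable]: "g \<in> borel_measurable Q" and bnd: "\<And>x. \<bar>g x\<bar> \<le> B"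
  shows "ereal (dv P Q g) \<le> rel_entropy P Q"
proof (cases "absolutely_continuous Q P \<and> integrable P (entropy_density (exp 1) Q P)")
  case False
  then show ?thesis unfolding rel_entropy_def by (simp only: if_False) simp
next
  case True
  then have ac: "absolutely_continuous Q P" and int: "integrable P (entropy_density (exp 1) Q P)" by auto
  interpret P: prob_space P by fact
  interpret Q: prob_space Q by fact
  define R where "R = RN_deriv Q P"
  define f where "f x = enn2real (R x)" for x
  have R_meas[measurable]: "R \<in> borel_measurable Q" unfolding R_def by simp
  have gP[measurable]: "g \<in> borel_measurable P" using g sets_eq by (simp cong: measurable_cong_sets)
  have RP[measurable]: "R \<in> borel_measurable P" using R_meas sets_eq by (simp cong: measurable_cong_sets)
  have dens: "density Q R = P" unfolding R_def using ac sets_eq by (intro Q.density_RN_deriv) auto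
  have KL: "KL_divergence (exp 1) Q P = (\<integral>x. ln (f x) \<partial>P)"
    by (simp add: KL_divergence_def entropy_density_exp1 f_def R_def)
  have intln: "integrable P (\<lambda>x. ln (f x))" using int by (simp add: entropy_density_exp1 f_def R_def)
  have fin_Q: "AE x in Q. R x \<noteq> \<infinity>" unfolding R_def
    using ac sets_eq by (intro Q.RN_deriv_finite) (auto simp: P.sigma_finite_measure)
  have fin_P: "AE x in P. R x \<noteq> \<infinity>"
    by (rule absolutely_continuous_AE[OF sets_eq ac fin_Q])
  have nz_P: "AE x in P. R x \<noteq> 0"
  proof -
    have "AE x in density Q R. R x \<noteq> 0"
      by (subst AE_density) auto
    then show ?thesis by (simp only: dens)
  qed
  have fpos: "AE x in P. f x > 0"
    using fin_P nz_P by eventually_elim (auto simp: f_def enn2real_positive_iff less_top zero_less_iff_neq_zero)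
  define Z where "Z = (\<integral>x. exp (g x) \<partial>Q)"
  have int_expg: "integrable Q (\<lambda>x. exp (g x))"
    by (rule Q.integrable_const_bound[where B="exp B"]) (use bnd in \<open>auto intro!: AE_I2 simp: abs_le_iff\<close>)
  have Zge: "exp (-B) \<le> Z"
  proof -
    have "(\<integral>x. exp (-B) \<partial>Q) \<le> Z" unfolding Z_def
      using bnd by (intro integral_mono int_expg) (auto, metis abs_le_iff minus_le_iff)
    then show ?thesis by (simp add: Q.prob_space)
  qed
  have Z0: "Z > 0" using Zge by (meson exp_gt_zero less_le_trans)
  define r where "r x = exp (g x) / (f x * Z)" for x
  have r_meas[measurable]: "r \<in> borel_measurable P" unfolding r_def f_def by measurable
  have nn: "(\<integral>\<^sup>+x. ennreal (r x) \<partial>P) \<le> 1"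
  proof -
    have "(\<integral>\<^sup>+x. ennreal (r x) \<partial>P) = (\<integral>\<^sup>+x. ennreal (r x) \<partial>density Q R)" using dens by simp
    also have "\<dots> = (\<integral>\<^sup>+x. R x * ennreal (r x) \<partial>Q)"
      by (subst nn_integral_density) (auto simp: r_def f_def cong: measurable_cong_sets)
    also have "\<dots> \<le> (\<integral>\<^sup>+x. ennreal (exp (g x) / Z) \<partial>Q)"
    proof (intro nn_integral_mono)
      fix x
      show "R x * ennreal (r x) \<le> ennreal (exp (g x) / Z)"
      proof (cases "R x")
        case (real t)
        show ?thesis
        proof (cases "t = 0")
          case True then show ?thesis using real by simp
        next
          case False
          then have "t > 0" using real by simp
          then have "t * (exp (g x) / (t * Z)) = exp (g x) / Z" by simp
          then show ?thesis using real \<open>t > 0\<close> Z0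
            by (simp add: r_def f_def ennreal_mult''[symmetric])
        qed
      next
        case top then show ?thesis by (simp add: r_def f_def)
      qed
    qed
    also have "\<dots> = ennreal (\<integral>x. exp (g x) / Z \<partial>Q)"
      by (rule nn_integral_eq_integral) (use int_expg Z0 in auto)
    also have "\<dots> = 1" using Z0 by (simp add: Z_def)
    finally show ?thesis .
  qed
  have r_nonneg: "AE x in P. 0 \<le> r x" using fpos by eventually_elim (use Z0 in \<open>auto simp: r_def\<close>)
  have int_r: "integrable P r"
  proof (rule integrableI_nonneg)
    show "(\<integral>\<^sup>+x. ennreal (r x) \<partial>P) < \<infinity>"
      using order.strict_trans1[OF nn ennreal_one_less_top] by simp
  qed (use r_nonneg in simp_all)
  have intr_le: "(\<integral>x. r x \<partial>P) \<le> 1"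
  proof -
    have "(\<integral>x. r x \<partial>P) = enn2real (\<integral>\<^sup>+x. ennreal (r x) \<partial>P)"
      by (rule integral_eq_nn_integral) (use r_nonneg in auto)
    also have "\<dots> \<le> 1" using nn by (intro enn2real_leI) auto
    finally show ?thesis .
  qed
  have int_g: "integrable P g"
    by (rule P.integrable_const_bound[where B=B]) (use bnd in \<open>auto intro!: AE_I2\<close>)
  have ptw: "AE x in P. g x - ln (f x) - ln Z \<le> r x - 1"
    using fpos
  proof eventually_elim
    case (elim x)
    have "ln (r x) \<le> r x - 1" using elim Z0 by (intro ln_le_minus_one) (simp add: r_def)
    moreover have "ln (r x) = g x - ln (f x) - ln Z"
      using elim Z0 by (simp add: r_def ln_div ln_mult)
    ultimately show ?case by simp
  qed
  have "(\<integral>x. g x - ln (f x) - ln Z \<partial>P) \<le> (\<integral>x. r x - 1 \<partial>P)"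
    by (rule integral_mono_AE) (use int_g intln int_r ptw in auto)
  also have "\<dots> = (\<integral>x. r x \<partial>P) - 1" using int_r by (simp add: P.prob_space)
  finally have "(\<integral>x. g x \<partial>P) - (\<integral>x. ln (f x) \<partial>P) - ln Z \<le> 0"
    using int_g intln intr_le by (simp add: P.prob_space)
  then show ?thesis using True KL by (simp add: rel_entropy_def dv_def Z_def)
qed

definition G2 :: "real \<Rightarrow> real \<Rightarrow> 'a set \<Rightarrow> 'a \<Rightarrow> real" where
  "G2 \<alpha> \<beta> A x = \<alpha> * indicator A x + \<beta> * (1 - indicator A x)"

lemma G2_meas[measurable]: assumes [measurable]: "A \<in> sets M" shows "G2 \<alpha> \<beta> A \<in> borel_measurable M"
  unfolding G2_def by measurable

lemma G2_bnd: "\<bar>G2 \<alpha> \<beta> A x\<bar> \<le> \<bar>\<alpha>\<bar> + \<bar>\<beta>\<bar>"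
  unfolding G2_def by (cases "x \<in> A") auto

lemma G2_integral:
  assumes "prob_space M" "A \<in> sets M"
  shows "(\<integral>x. G2 \<alpha> \<beta> A x \<partial>M) = \<alpha> * measure M A + \<beta> * (1 - measure M A)"
proof -
  interpret prob_space M by fact
  have "(\<lambda>x. G2 \<alpha> \<beta> A x) = (\<lambda>x. \<beta> + (\<alpha> - \<beta>) * indicator A x)"
    by (auto simp: G2_def fun_eq_iff indicator_def)
  then have "(\<integral>x. G2 \<alpha> \<beta> A x \<partial>M) = (\<integral>x. \<beta> + (\<alpha> - \<beta>) * indicator A x \<partial>M)" by simp
  also have "\<dots> = (\<integral>x. \<beta> \<partial>M) + (\<integral>x. (\<alpha> - \<beta>) * indicator A x \<partial>M)"
    using assms(2) by (intro Bochner_Integration.integral_add) (auto intro!: integrable_real_indicator simp: emeasure_eq_measure)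
  also have "\<dots> = \<beta> + (\<alpha> - \<beta>) * measure M A"
    using assms(2) by (simp add: prob_space)
  finally show ?thesis by (simp add: algebra_simps)
qed

lemma G2_exp_integral:
  assumes "prob_space M" "A \<in> sets M"
  shows "(\<integral>x. exp (G2 \<alpha> \<beta> A x) \<partial>M) = exp \<alpha> * measure M A + exp \<beta> * (1 - measure M A)"
proof -
  interpret prob_space M by fact
  have "(\<lambda>x. exp (G2 \<alpha> \<beta> A x)) = (\<lambda>x. exp \<beta> + (exp \<alpha> - exp \<beta>) * indicator A x)"
    by (auto simp: G2_def fun_eq_iff indicator_def)
  then have "(\<integral>x. exp (G2 \<alpha> \<beta> A x) \<partial>M) = (\<integral>x. exp \<beta> + (exp \<alpha> - exp \<beta>) * indicator A x \<partial>M)" by simp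
  also have "\<dots> = (\<integral>x. exp \<beta> \<partial>M) + (\<integral>x. (exp \<alpha> - exp \<beta>) * indicator A x \<partial>M)"
    using assms(2) by (intro Bochner_Integration.integral_add) (auto intro!: integrable_real_indicator simp: emeasure_eq_measure)
  also have "\<dots> = exp \<beta> + (exp \<alpha> - exp \<beta>) * measure M A"
    using assms(2) by (simp add: prob_space)
  finally show ?thesis by (simp add: algebra_simps)
qed

lemma dv_G2:
  assumes "prob_space P" "prob_space Q" "sets P = sets Q" "A \<in> sets Q"
  shows "dv P Q (G2 \<alpha> \<beta> A) = \<alpha> * measure P A + \<beta> * (1 - measure P A)
            - ln (exp \<alpha> * measure Q A + exp \<beta> * (1 - measure Q A))"
  using assms by (simp add: dv_def G2_integral G2_exp_integral)

lemma rel_entropy_cases: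
  assumes "rel_entropy P Q \<noteq> \<infinity>"
  shows "absolutely_continuous Q P" "rel_entropy P Q = ereal (KL_divergence (exp 1) Q P)"
  using assms by (auto simp: rel_entropy_def split: if_splits)

lemma tv_le_Psi:
  assumes P: "prob_space P" and Q: "prob_space Q" and sets_eq: "sets P = sets Q"
  shows "tv_dist P Q \<le> Psi (rel_entropy P Q)"
proof -
  interpret P: prob_space P by fact
  interpret Q: prob_space Q by fact
  have key: "measure P A - measure Q A \<le> Psi (rel_entropy P Q)" if A: "A \<in> sets P" for A
  proof (cases "rel_entropy P Q = \<infinity>")
    case True
    then have "Psi (rel_entropy P Q) = 1" by (simp add: Psi_def)
    then show ?thesis using P.prob_le_1[of A] measure_nonneg[of Q A] by linarith
  next
    case False
    note ac = rel_entropy_cases(1)[OF False]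
    define d where "d = KL_divergence (exp 1) Q P"
    have re: "rel_entropy P Q = ereal d" using rel_entropy_cases(2)[OF False] by (simp add: d_def)
    have AQ: "A \<in> sets Q" using A sets_eq by simp
    have gb: "d \<ge> dv P Q g" if "g \<in> borel_measurable Q" "\<And>x. \<bar>g x\<bar> \<le> B" for g B
      using gibbs[OF P Q sets_eq that] re by simp
    have d0: "d \<ge> 0"
      using gb[of "\<lambda>_. 0" 0] by (simp add: dv_def Q.prob_space)
    have PsiE: "Psi (rel_entropy P Q) = sqrt (min (d/2) (1 - exp (-d)))"
      by (simp add: re Psi_def)
    define p where "p = measure P A"
    define q where "q = measure Q A"
    show ?thesis
    proof (cases "p - q \<le> 0")
      case True
      have "0 \<le> sqrt (min (d/2) (1 - exp (-d)))" using d0 by simp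
      then show ?thesis using True PsiE unfolding p_def q_def by linarith
    next
      case False
      define \<Delta> where "\<Delta> = p - q"
      have D0: "\<Delta> > 0" using False by (simp add: \<Delta>_def)
      have p1: "p \<le> 1" unfolding p_def by simp
      have q0: "q > 0"
      proof (rule ccontr)
        assume "\<not> q > 0"
        then have q00: "q = 0" using measure_nonneg[of Q A] unfolding q_def by linarith
        then have "emeasure Q A = 0" unfolding q_def by (simp add: Q.emeasure_eq_measure)
        then have "emeasure P A = 0" using absolutely_continuousD[OF ac AQ] by simp
        then have "p = 0" by (simp add: p_def measure_def)
        then show False using D0 q00 by (simp add: \<Delta>_def)
      qed
      have qp: "q < p" using D0 by (simp add: \<Delta>_def)
      have q1: "q < 1" using qp p1 by simp
      have pin: "2 * \<Delta>^2 \<le> d"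
      proof -
        define t where "t = 4 * \<Delta>"
        have "dv P Q (G2 t 0 A) \<le> d" using gb[OF G2_meas[OF AQ] G2_bnd] .
        moreover have "dv P Q (G2 t 0 A) = t * p - ln (1 + q * (exp t - 1))"
          by (simp add: dv_G2[OF P Q sets_eq AQ] p_def q_def algebra_simps)
        moreover have "- t * q + ln (1 + q * (exp t - 1)) \<le> t^2 / 8"
          using Hoeffdings_lemma_aux[of t q] D0 q0 by (simp add: t_def)
        ultimately have "t * (p - q) - t^2/8 \<le> d" by (simp add: algebra_simps)
        moreover have "t * (p - q) - t^2/8 = 2 * \<Delta>^2"
          unfolding t_def \<Delta>_def by (simp add: power2_eq_square field_simps)
        ultimately show ?thesis by linarith
      qed
      \<comment> \<open>Bretagnolle-Huber part\<close>
      have bh: "- ln (1 - \<Delta>^2) \<le> d"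
      proof (cases "p = 1")
        case True
        have "dv P Q (G2 (ln (1/q)) 0 A) \<le> d" using gb[OF G2_meas[OF AQ] G2_bnd] .
        moreover have "dv P Q (G2 (ln (1/q)) 0 A) = ln (1/q) - ln (2 - q)"
          using q0 True by (simp add: dv_G2[OF P Q sets_eq AQ] p_def[symmetric] q_def[symmetric])
        moreover have "ln (1/q) - ln (2 - q) = - ln (1 - \<Delta>^2)"
        proof -
          have "1 - \<Delta>^2 = q * (2 - q)" using True by (simp add: \<Delta>_def power2_eq_square algebra_simps)
          then show ?thesis using q0 q1 by (simp add: ln_mult ln_div)
        qed
        ultimately show ?thesis by simp
      next
        case False
        then have p1': "p < 1" using p1 by simp
        have "dv P Q (G2 (ln (p/q)) (ln ((1-p)/(1-q))) A) \<le> d" using gb[OF G2_meas[OF AQ] G2_bnd] .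
        moreover have "dv P Q (G2 (ln (p/q)) (ln ((1-p)/(1-q))) A) = p * ln (p/q) + (1-p) * ln ((1-p)/(1-q))"
        proof -
          have "exp (ln (p/q)) * q + exp (ln ((1-p)/(1-q))) * (1 - q) = 1"
            using q0 qp p1' by simp
          then show ?thesis by (simp add: dv_G2[OF P Q sets_eq AQ] p_def[symmetric] q_def[symmetric])
        qed
        moreover have "- ln (1 - (p - q)^2) \<le> p * ln (p/q) + (1-p) * ln ((1-p)/(1-q))"
          by (rule bh_aux) (use q0 qp p1' in auto)
        ultimately show ?thesis by (simp add: \<Delta>_def)
      qed
      have D1: "\<Delta> < 1" using q0 p1 by (simp add: \<Delta>_def)
      have pos: "0 < 1 - \<Delta>^2"
      proof -
        have "\<Delta>^2 < 1" using D0 D1 by (simp add: power_less_one_iff abs_less_iff)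
        then show ?thesis by simp
      qed
      have "exp (-d) \<le> 1 - \<Delta>^2"
      proof -
        have "-d \<le> ln (1 - \<Delta>^2)" using bh by simp
        then have "exp (-d) \<le> exp (ln (1 - \<Delta>^2))" by simp
        then show ?thesis using pos by simp
      qed
      then have "\<Delta>^2 \<le> min (d/2) (1 - exp (-d))" using pin by simp
      then have "\<Delta> \<le> sqrt (min (d/2) (1 - exp (-d)))" by (rule real_le_rsqrt)
      then show ?thesis using PsiE by (simp add: \<Delta>_def p_def q_def)
    qed
  qed
  show ?thesis unfolding tv_dist_def
    by (rule cSUP_least) (use key in auto)
qed

lemma tv_ge:
  assumes "prob_space P" "prob_space Q" "A \<in> sets P"
  shows "measure P A - measure Q A \<le> tv_dist P Q"
proof -
  interpret P: prob_space P by fact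
  interpret Q: prob_space Q by fact
  have "bdd_above ((\<lambda>A. measure P A - measure Q A) ` sets P)"
  proof (rule bdd_aboveI[where M=1])
    fix y assume "y \<in> (\<lambda>A. measure P A - measure Q A) ` sets P"
    then obtain B where "y = measure P B - measure Q B" by auto
    then show "y \<le> 1" using P.prob_le_1[of B] measure_nonneg[of Q B] by linarith
  qed
  then show ?thesis unfolding tv_dist_def by (rule cSUP_upper[OF assms(3)])
qed

lemma tv_nonneg:
  assumes "prob_space P" "prob_space Q"
  shows "0 \<le> tv_dist P Q"
  using tv_ge[OF assms, of "{}"] by simp

lemma tv_le_1:
  assumes "prob_space P" "prob_space Q"
  shows "tv_dist P Q \<le> 1"
proof -
  interpret P: prob_space P by fact
  interpret Q: prob_space Q by fact
  show ?thesis unfolding tv_dist_def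
  proof (rule cSUP_least)
    fix B show "measure P B - measure Q B \<le> 1" using P.prob_le_1[of B] measure_nonneg[of Q B] by linarith
  qed (use sets.empty_sets in blast)
qed

lemma sum_count:
  fixes m k :: nat
  assumes "m \<le> k"
  shows "(\<Sum>j\<in>{1..k}. indicator {1..m} j :: real) = real m"
proof -
  have e: "{1..k} \<inter> {1..m} = {1..m}" using assms by auto
  have "(\<Sum>j\<in>{1..k}. indicator {1..m} j :: real) = (\<Sum>j\<in>{1..k}. if j \<in> {1..m} then 1 else 0)"
    by (rule sum.cong) (auto simp: indicator_def)
  also have "\<dots> = (\<Sum>j\<in>{1..k} \<inter> {1..m}. 1)"
    by (rule sum.inter_restrict[symmetric]) simp
  also have "\<dots> = (\<Sum>j\<in>{1..m}. 1)" by (simp only: e)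
  finally show ?thesis by simp
qed

lemma int_diff_le_tv:
  assumes P: "prob_space P" and Q: "prob_space Q" and sets_eq: "sets P = sets Q"
    and g[measurable]: "g \<in> borel_measurable P"
    and bnd: "\<And>x. x \<in> space P \<Longrightarrow> a \<le> g x \<and> g x \<le> b"
  shows "(\<integral>x. g x \<partial>P) - (\<integral>x. g x \<partial>Q) \<le> (b - a) * tv_dist P Q"
proof -
  interpret P: prob_space P by fact
  interpret Q: prob_space Q by fact
  have sp: "space Q = space P" using sets_eq_imp_space_eq[OF sets_eq] by simp
  have gQ[measurable]: "g \<in> borel_measurable Q" using g sets_eq by (simp cong: measurable_cong_sets)
  have ab: "a \<le> b" using bnd P.not_empty by (meson all_not_in_conv order.trans)
  have gb: "\<bar>g x\<bar> \<le> \<bar>a\<bar> + \<bar>b\<bar>" if "x \<in> space P" for x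
    using bnd[OF that] by arith
  have intP: "integrable P g"
    by (rule P.integrable_const_bound[where B="\<bar>a\<bar> + \<bar>b\<bar>"]) (use gb in \<open>auto intro!: AE_I2\<close>)
  have intQ: "integrable Q g"
    by (rule Q.integrable_const_bound[where B="\<bar>a\<bar> + \<bar>b\<bar>"]) (use gb sp in \<open>auto intro!: AE_I2\<close>)
  have tv0: "0 \<le> tv_dist P Q" by (rule tv_nonneg[OF P Q])
  show ?thesis
  proof (cases "a = b")
    case True
    have "(\<integral>x. g x \<partial>P) = (\<integral>x. a \<partial>P)"
      by (rule Bochner_Integration.integral_cong) (use True in \<open>auto dest: bnd intro: antisym\<close>)
    moreover have "(\<integral>x. g x \<partial>Q) = (\<integral>x. a \<partial>Q)"
      by (rule Bochner_Integration.integral_cong) (use True sp in \<open>auto dest: bnd intro: antisym\<close>)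
    ultimately show ?thesis using True by (simp add: P.prob_space Q.prob_space)
  next
    case False
    then have c0: "b - a > 0" using ab by simp
    define c where "c = b - a"
    have main: "(\<integral>x. g x \<partial>P) - (\<integral>x. g x \<partial>Q) \<le> c * tv_dist P Q + c / k" if k0: "k > 0" for k :: nat
    proof -
      define m where "m x = nat \<lfloor>real k * (g x - a) / c\<rfloor>" for x
      have m_meas[measurable]: "m \<in> measurable P (count_space UNIV)" unfolding m_def by measurable
      define A where "A j = {x \<in> space P. j \<le> m x}" for j
      have A_sets[measurable]: "A j \<in> sets P" for j unfolding A_def by measurable
      define S where "S x = c / k * (\<Sum>j\<in>{1..k}. indicator (A j) x)" for x
      have mk: "m x \<le> k" if "x \<in> space P" for x
      proof -
        have "real k * (g x - a) / c \<le> real k"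
          using bnd[OF that] c0 by (simp add: c_def divide_le_eq mult_left_mono)
        then show ?thesis unfolding m_def by (simp add: nat_le_iff floor_le_iff)
      qed
      have Sm: "S x = c / k * m x" if "x \<in> space P" for x
      proof -
        have "(\<Sum>j\<in>{1..k}. indicator (A j) x :: real) = (\<Sum>j\<in>{1..k}. indicator {1..m x} j)"
          by (rule sum.cong) (auto simp: A_def indicator_def that)
        then show ?thesis unfolding S_def using sum_count[OF mk[OF that]] by simp
      qed
      have Sle: "S x \<le> g x - a" and Sge: "g x - a \<le> S x + c / k" if "x \<in> space P" for x
      proof -
        define y where "y = real k * (g x - a) / c"
        have y0: "0 \<le> y" using bnd[OF that] c0 by (simp add: y_def c_def)
        have my: "real (m x) = of_int \<lfloor>y\<rfloor>" unfolding m_def y_def[symmetric] using y0 by simp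
        have gy: "g x - a = c / k * y" using c0 k0 by (simp add: y_def c_def)
        have "c / k * of_int \<lfloor>y\<rfloor> \<le> c / k * y" using c0 by (intro mult_left_mono) (auto simp: c_def)
        then show "S x \<le> g x - a"
          using Sm[OF that] my gy by simp
        have "y \<le> of_int \<lfloor>y\<rfloor> + 1" by linarith
        then have "c / k * y \<le> c / k * (of_int \<lfloor>y\<rfloor> + 1)" using c0 by (intro mult_left_mono) (auto simp: c_def)
        then show "g x - a \<le> S x + c / k"
          using Sm[OF that] my gy by (simp add: algebra_simps)
      qed
      have intS: "(\<integral>x. S x \<partial>M) = c / k * (\<Sum>j\<in>{1..k}. measure M (A j))" if "prob_space M" "sets M = sets P" for M
      proof -
        interpret M: prob_space M by fact
        have [measurable]: "A j \<in> sets M" for j using that(2) by simp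
        show ?thesis unfolding S_def
          by (simp add: integral_sum M.emeasure_eq_measure)
      qed
      have iS: "integrable M S" if "prob_space M" "sets M = sets P" for M
      proof -
        interpret M: prob_space M by fact
        have [measurable]: "A j \<in> sets M" for j using that(2) by simp
        show ?thesis unfolding S_def by (simp add: M.emeasure_eq_measure)
      qed
      have "(\<integral>x. g x - a \<partial>P) \<le> (\<integral>x. S x + c / k \<partial>P)"
        by (rule integral_mono) (use intP iS[OF P refl] Sge in auto)
      then have 1: "(\<integral>x. g x \<partial>P) - a \<le> c / k * (\<Sum>j\<in>{1..k}. measure P (A j)) + c / k"
        using intP iS[OF P refl] intS[OF P refl] by (simp add: P.prob_space)
      have "(\<integral>x. S x \<partial>Q) \<le> (\<integral>x. g x - a \<partial>Q)"
        by (rule integral_mono) (use intQ iS[OF Q sets_eq[symmetric]] Sle sp in auto)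
      then have 2: "c / k * (\<Sum>j\<in>{1..k}. measure Q (A j)) \<le> (\<integral>x. g x \<partial>Q) - a"
        using intQ intS[OF Q sets_eq[symmetric]] by (simp add: Q.prob_space)
      have "(\<Sum>j\<in>{1..k}. measure P (A j) - measure Q (A j)) \<le> (\<Sum>j\<in>{1..k}. tv_dist P Q)"
        by (rule sum_mono) (rule tv_ge[OF P Q A_sets])
      then have 3: "(\<Sum>j\<in>{1..k}. measure P (A j)) - (\<Sum>j\<in>{1..k}. measure Q (A j)) \<le> k * tv_dist P Q"
        by (simp add: sum_subtractf)
      have "c / k * ((\<Sum>j\<in>{1..k}. measure P (A j)) - (\<Sum>j\<in>{1..k}. measure Q (A j))) \<le> c / k * (k * tv_dist P Q)"
        using 3 c0 by (intro mult_left_mono) (auto simp: c_def)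
      also have "\<dots> = c * tv_dist P Q" using k0 by simp
      finally show ?thesis using 1 2 by (simp add: algebra_simps)
    qed
    show ?thesis
    proof (rule ccontr)
      assume nt: "\<not> ?thesis"
      define D where "D = (\<integral>x. g x \<partial>P) - (\<integral>x. g x \<partial>Q) - c * tv_dist P Q"
      have D0: "D > 0" using nt by (simp add: D_def c_def)
      obtain k :: nat where k: "c / D < k" using reals_Archimedean2 by blast
      have "c / D > 0" using c0 D0 by (simp add: c_def)
      then have "real k > 0" using k by linarith
      then have k0: "k > 0" by simp
      have "c / k < D" using k D0 k0 c0 by (simp add: c_def field_simps)
      then show False using main[OF k0] by (simp add: D_def)
    qed
  qed
qed

definition bas :: "'a::second_countable_topology set set" where
  "bas = (SOME B. countable B \<and> (\<forall>C\<in>B. open C) \<and> (\<forall>S. open S \<longrightarrow> (\<exists>U. U \<subseteq> B \<and> S = \<Union>U)))"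

lemma bas_props:
  "countable (bas :: 'a::second_countable_topology set set)" "\<And>C. C \<in> (bas :: 'a set set) \<Longrightarrow> open C"
  "\<And>S::'a set. open S \<Longrightarrow> \<exists>U. U \<subseteq> bas \<and> S = \<Union>U"
proof -
  obtain B :: "'a set set" where "countable B" "\<And>C. C \<in> B \<Longrightarrow> open C" "\<And>S. open S \<Longrightarrow> \<exists>U. U \<subseteq> B \<and> S = \<Union>U"
    by (rule univ_second_countable) blast
  then have ex: "\<exists>B::'a set set. countable B \<and> (\<forall>C\<in>B. open C) \<and> (\<forall>S. open S \<longrightarrow> (\<exists>U. U \<subseteq> B \<and> S = \<Union>U))"
    by blast
  have "countable (bas :: 'a set set) \<and> (\<forall>C\<in>(bas :: 'a set set). open C) \<and> (\<forall>S::'a set. open S \<longrightarrow> (\<exists>U. U \<subseteq> bas \<and> S = \<Union>U))"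
    unfolding bas_def by (rule someI_ex[OF ex])
  then show "countable (bas :: 'a::second_countable_topology set set)" "\<And>C. C \<in> (bas :: 'a set set) \<Longrightarrow> open C"
    "\<And>S::'a set. open S \<Longrightarrow> \<exists>U. U \<subseteq> bas \<and> S = \<Union>U" by auto
qed

lemma bas_nonempty: "(bas :: 'a::second_countable_topology set set) \<noteq> {}"
proof
  assume e: "(bas :: 'a set set) = {}"
  obtain U where "U \<subseteq> (bas :: 'a set set)" "(UNIV::'a set) = \<Union>U" using bas_props(3)[OF open_UNIV] by blast
  then show False using e by auto
qed

definition bset :: "nat \<Rightarrow> 'a::second_countable_topology set" where
  "bset i = from_nat_into bas i"

lemma range_bset: "range (bset :: nat \<Rightarrow> 'a::second_countable_topology set) = bas"
  unfolding bset_def using range_from_nat_into[OF bas_nonempty bas_props(1)] by (simp add: image_def)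

lemma open_bset: "open (bset i)"
  using range_bset bas_props(2) by blast

definition Uset :: "nat list \<Rightarrow> 'a::second_countable_topology set" where
  "Uset bs = \<Union> (bset ` set bs)"

lemma open_Uset: "open (Uset bs)"
  unfolding Uset_def using open_bset by auto

lemma Uset_borel[measurable]: "Uset bs \<in> sets borel"
  by (rule borel_open[OF open_Uset])

lemma measure_symdiff_le:
  assumes "finite_measure M" "A \<in> sets M" "B \<in> sets M"
  shows "measure M A \<le> measure M B + measure M ((A - B) \<union> (B - A))"
proof -
  interpret finite_measure M by fact
  have "measure M A \<le> measure M (B \<union> ((A - B) \<union> (B - A)))"
    using assms by (intro finite_measure_mono) auto
  also have "\<dots> \<le> measure M B + measure M ((A - B) \<union> (B - A))"
    using assms by (intro measure_Un_le) auto
  finally show ?thesis .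
qed

lemma outer_approx:
  fixes M :: "'a::polish_space measure"
  assumes "finite_measure M" "sets M = sets borel" "C \<in> sets borel" "e > 0"
  shows "\<exists>V. open V \<and> C \<subseteq> V \<and> measure M (V - C) < e"
proof -
  interpret finite_measure M by fact
  have C: "C \<in> sets M" using assms by simp
  have lt: "emeasure M C < emeasure M C + ennreal e"
    using assms(4) emeasure_finite[of C] by (simp add: ennreal_add_diff_cancel_left less_top ennreal_less_iff)
  have eq: "emeasure M C = (INF U \<in> {U. C \<subseteq> U \<and> open U}. emeasure M U)"
    by (rule outer_regular) (use assms emeasure_finite in auto)
  have "(INF U \<in> {U. C \<subseteq> U \<and> open U}. emeasure M U) < emeasure M C + ennreal e"
    using lt eq by simp
  then obtain V where V: "C \<subseteq> V" "open V" "emeasure M V < emeasure M C + ennreal e"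
    by (auto simp: INF_less_iff)
  have Vs: "V \<in> sets M" using V(2) assms(2) by simp
  have "ennreal (measure M V) < ennreal (measure M C + e)"
    using V(3) assms(4) by (simp add: emeasure_eq_measure ennreal_plus[symmetric] del: ennreal_plus)
  then have "measure M V < measure M C + e"
    by (rule ennreal_less_iff[OF measure_nonneg, THEN iffD1])
  moreover have "measure M (V - C) = measure M V - measure M C"
    using Vs C V(1) by (intro finite_measure_Diff) auto
  ultimately show ?thesis using V by auto
qed

lemma approx_set:
  fixes M1 M2 :: "'a::polish_space measure"
  assumes M1: "finite_measure M1" "sets M1 = sets borel" and M2: "finite_measure M2" "sets M2 = sets borel"
    and C: "C \<in> sets borel" and e: "e > 0"
  shows "\<exists>bs. measure M1 ((C - Uset bs) \<union> (Uset bs - C)) < e \<and> measure M2 ((C - Uset bs) \<union> (Uset bs - C)) < e"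
proof -
  interpret F1: finite_measure M1 by fact
  interpret F2: finite_measure M2 by fact
  obtain V1 where V1: "open V1" "C \<subseteq> V1" "measure M1 (V1 - C) < e/2"
    using outer_approx[OF M1 C, of "e/2"] e by auto
  obtain V2 where V2: "open V2" "C \<subseteq> V2" "measure M2 (V2 - C) < e/2"
    using outer_approx[OF M2 C, of "e/2"] e by auto
  define V where "V = V1 \<inter> V2"
  have Vo: "open V" "C \<subseteq> V" using V1 V2 by (auto simp: V_def)
  have VC1: "measure M1 (V - C) < e/2"
    using V1 M1 C by (intro le_less_trans[OF F1.finite_measure_mono V1(3)]) (auto simp: V_def)
  have VC2: "measure M2 (V - C) < e/2"
    using V2 M2 C by (intro le_less_trans[OF F2.finite_measure_mono V2(3)]) (auto simp: V_def)
  obtain W where W: "W \<subseteq> bas" "V = \<Union>W" using bas_props(3)[OF Vo(1)] by blast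
  define I where "I = {i. bset i \<in> W}"
  have VI: "V = (\<Union>i\<in>I. bset i)"
  proof
    show "V \<subseteq> (\<Union>i\<in>I. bset i)"
    proof
      fix x assume "x \<in> V"
      then obtain B where B: "B \<in> W" "x \<in> B" using W by auto
      then obtain i where "bset i = B" using W range_bset by (metis imageE subsetD)
      then show "x \<in> (\<Union>i\<in>I. bset i)" using B by (auto simp: I_def)
    qed
    show "(\<Union>i\<in>I. bset i) \<subseteq> V" using W by (auto simp: I_def)
  qed
  define Vn :: "nat \<Rightarrow> 'a set" where "Vn n = Uset (filter (\<lambda>i. i \<in> I) [0..<n])" for n
  have Vn_eq: "Vn n = (\<Union>i\<in>{i\<in>I. i < n}. bset i)" for n
    unfolding Vn_def Uset_def by auto
  have inc: "incseq Vn" unfolding incseq_def Vn_eq by auto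
  have UVn: "(\<Union>n. Vn n) = V" unfolding Vn_eq VI by auto
  have Vn_sub: "Vn n \<subseteq> V" for n using UVn by auto
  have Vn_sets: "range Vn \<subseteq> sets borel" unfolding Vn_def by auto
  have lim1: "(\<lambda>n. measure M1 (Vn n)) \<longlonglongrightarrow> measure M1 V"
    using F1.finite_Lim_measure_incseq[of Vn] Vn_sets inc M1 UVn by auto
  have lim2: "(\<lambda>n. measure M2 (Vn n)) \<longlonglongrightarrow> measure M2 V"
    using F2.finite_Lim_measure_incseq[of Vn] Vn_sets inc M2 UVn by auto
  obtain N1 where N1: "\<And>n. n \<ge> N1 \<Longrightarrow> dist (measure M1 (Vn n)) (measure M1 V) < e/2"
    using lim1[unfolded lim_sequentially] e by (meson half_gt_zero)
  obtain N2 where N2: "\<And>n. n \<ge> N2 \<Longrightarrow> dist (measure M2 (Vn n)) (measure M2 V) < e/2"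
    using lim2[unfolded lim_sequentially] e by (meson half_gt_zero)
  define n where "n = max N1 N2"
  have Vsets: "V \<in> sets borel" using Vo by simp
  have Vnsets: "Vn n \<in> sets borel" using Vn_sets by auto
  have bound: "measure M ((C - Vn n) \<union> (Vn n - C)) < e"
    if F: "finite_measure M" and sM: "sets M = sets borel" and VC: "measure M (V - C) < e/2"
      and dn: "dist (measure M (Vn n)) (measure M V) < e/2" for M
  proof -
    interpret F: finite_measure M by fact
    have "measure M ((C - Vn n) \<union> (Vn n - C)) \<le> measure M ((V - Vn n) \<union> (V - C))"
      using Vo(2) Vn_sub[of n] sM Vsets Vnsets C by (intro F.finite_measure_mono) auto
    also have "\<dots> \<le> measure M (V - Vn n) + measure M (V - C)"
      using sM Vsets Vnsets C by (intro measure_Un_le) auto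
    also have "measure M (V - Vn n) = measure M V - measure M (Vn n)"
      using sM Vsets Vnsets Vn_sub[of n] by (intro F.finite_measure_Diff) auto
    moreover have "measure M V - measure M (Vn n) < e/2"
      using dn unfolding dist_real_def abs_less_iff by linarith
    ultimately show ?thesis using VC by linarith
  qed
  show ?thesis
    apply (rule exI[of _ "filter (\<lambda>i. i \<in> I) [0..<n]"])
    using bound[OF M1 VC1 N1] bound[OF M2 VC2 N2] by (simp add: n_def Vn_def)
qed

lemma tv_Uset:
  fixes P Q :: "'a::polish_space measure"
  assumes P: "prob_space P" "sets P = sets borel" and Q: "prob_space Q" "sets Q = sets borel"
  shows "tv_dist P Q = (SUP bs. measure P (Uset bs) - measure Q (Uset bs))"
proof (rule antisym)
  interpret P: prob_space P by fact
  interpret Q: prob_space Q by fact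
  have bdd: "bdd_above (range (\<lambda>bs. measure P (Uset bs) - measure Q (Uset bs)))"
  proof (rule bdd_aboveI[where M=1])
    fix y assume "y \<in> range (\<lambda>bs. measure P (Uset bs) - measure Q (Uset bs))"
    then obtain B where "y = measure P (Uset B) - measure Q (Uset B)" by auto
    then show "y \<le> 1" using P.prob_le_1[of "Uset B"] measure_nonneg[of Q "Uset B"] by linarith
  qed
  show "tv_dist P Q \<le> (SUP bs. measure P (Uset bs) - measure Q (Uset bs))"
    unfolding tv_dist_def
  proof (rule cSUP_least)
    show "sets P \<noteq> {}" using sets.empty_sets by blast
    fix A assume A: "A \<in> sets P"
    show "measure P A - measure Q A \<le> (SUP bs. measure P (Uset bs) - measure Q (Uset bs))"
    proof (rule field_le_epsilon)
      fix e :: real assume e: "e > 0"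
      obtain bs where bs: "measure P ((A - Uset bs) \<union> (Uset bs - A)) < e/2"
          "measure Q ((A - Uset bs) \<union> (Uset bs - A)) < e/2"
        using approx_set[OF P.finite_measure_axioms P(2) Q.finite_measure_axioms Q(2), of A "e/2"] A P(2) e
        by auto
      have "measure P A \<le> measure P (Uset bs) + measure P ((A - Uset bs) \<union> (Uset bs - A))"
        using A P(2) by (intro measure_symdiff_le) (auto simp: P.finite_measure_axioms)
      moreover have "measure Q (Uset bs) \<le> measure Q A + measure Q ((Uset bs - A) \<union> (A - Uset bs))"
        using A P(2) Q(2) by (intro measure_symdiff_le) (auto simp: Q.finite_measure_axioms)
      moreover have "measure P (Uset bs) - measure Q (Uset bs) \<le> (SUP bs. measure P (Uset bs) - measure Q (Uset bs))"
        by (rule cSUP_upper[OF UNIV_I bdd])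
      moreover have "(Uset bs - A) \<union> (A - Uset bs) = (A - Uset bs) \<union> (Uset bs - A)" by auto
      ultimately show "measure P A - measure Q A \<le> (SUP bs. measure P (Uset bs) - measure Q (Uset bs)) + e"
        using bs by auto
    qed
  qed
  show "(SUP bs. measure P (Uset bs) - measure Q (Uset bs)) \<le> tv_dist P Q"
    by (rule cSUP_least) (auto intro!: tv_ge[OF P(1) Q(1)] simp: P(2))
qed

lemma intb:
  fixes f :: "'a \<Rightarrow> real"
  assumes "finite_measure M" "f \<in> borel_measurable M" "\<And>x. x \<in> space M \<Longrightarrow> \<bar>f x\<bar> \<le> B"
  shows "integrable M f"
proof -
  interpret finite_measure M by fact
  show ?thesis by (rule integrable_const_bound[where B=B]) (use assms in \<open>auto intro!: AE_I2\<close>)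
qed

lemma SUP_min_ennreal:
  assumes "(p::real) \<ge> 0"
  shows "(SUP M::nat. ennreal (min p (real M))) = ennreal p"
proof (rule antisym)
  show "(SUP M::nat. ennreal (min p (real M))) \<le> ennreal p"
    by (rule SUP_least) (auto intro: ennreal_leI)
  have "ennreal p = ennreal (min p (real (nat \<lceil>p\<rceil>)))"
    by (simp add: min_def) linarith
  also have "\<dots> \<le> (SUP M::nat. ennreal (min p (real M)))"
    by (rule SUP_upper) simp
  finally show "ennreal p \<le> (SUP M::nat. ennreal (min p (real M)))" .
qed

lemma neg_xlnx_le: "(t::real) \<ge> 0 \<Longrightarrow> t * max (- ln t) 0 \<le> 1"
proof (cases "t = 0")
  case False
  assume t: "t \<ge> 0"
  then have t0: "t > 0" using False by simp
  show ?thesis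
  proof (cases "ln t \<ge> 0")
    case True then show ?thesis by simp
  next
    case False
    have "1 - 1/t \<le> ln t" using ln_le_minus_one[of "1/t"] t0 by (simp add: ln_div)
    then have "t * (1 - 1/t) \<le> t * ln t" using t0 by (intro mult_left_mono) auto
    then have "- (t * ln t) \<le> 1 - t" using t0 by (simp add: algebra_simps)
    then show ?thesis using False t0 by (simp add: max_def)
  qed
qed simp

lemma dv2:
  assumes P: "prob_space P" and Q: "prob_space Q" and sets_eq: "sets P = sets Q"
    and y: "y < rel_entropy P Q"
  shows "\<exists>g B. g \<in> borel_measurable Q \<and> (\<forall>x. \<bar>g x\<bar> \<le> B) \<and> y < ereal (dv P Q g)"
proof -
  interpret P: prob_space P by fact
  interpret Q: prob_space Q by fact
  show ?thesis
  proof (cases y)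
    case MInf
    then show ?thesis by (intro exI[of _ "\<lambda>_. 0"] exI[of _ 0]) auto
  next
    case PInf
    then show ?thesis using y by simp
  next
    case (real y0)
    show ?thesis
    proof (cases "absolutely_continuous Q P")
      case False
      then obtain A where A: "A \<in> null_sets Q" "A \<notin> null_sets P"
        unfolding absolutely_continuous_def by auto
      have AQ: "A \<in> sets Q" and QA: "emeasure Q A = 0" using A(1) by auto
      have AP: "A \<in> sets P" using AQ sets_eq by simp
      have "emeasure P A \<noteq> 0" using A(2) AP by auto
      then have pA: "measure P A > 0" using P.emeasure_eq_measure by (simp add: zero_less_measure_iff)
      have qA: "measure Q A = 0" using QA by (simp add: measure_def)
      define t where "t = (\<bar>y0\<bar> + 1) / measure P A"
      have "dv P Q (G2 t 0 A) = t * measure P A"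
        using qA by (simp add: dv_G2[OF P Q sets_eq AQ])
      also have "\<dots> = \<bar>y0\<bar> + 1" using pA by (simp add: t_def)
      finally have "y0 < dv P Q (G2 t 0 A)" by simp
      moreover have "\<forall>x. \<bar>G2 t 0 A x\<bar> \<le> \<bar>t\<bar> + \<bar>0\<bar>" by (intro allI G2_bnd)
      ultimately show ?thesis using real G2_meas[OF AQ]
        by (intro exI[of _ "G2 t 0 A"] exI[of _ "\<bar>t\<bar> + \<bar>0\<bar>"]) auto
    next
      case True
      note ac = True
      define R where "R = RN_deriv Q P"
      define f where "f x = enn2real (R x)" for x
      have R_meas[measurable]: "R \<in> borel_measurable Q" unfolding R_def by simp
      have RP[measurable]: "R \<in> borel_measurable P" using R_meas sets_eq by (simp cong: measurable_cong_sets)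
      have fQ[measurable]: "f \<in> borel_measurable Q" unfolding f_def by simp
      have fP[measurable]: "f \<in> borel_measurable P" unfolding f_def by simp
      have dens: "density Q R = P" unfolding R_def using ac sets_eq by (intro Q.density_RN_deriv) auto
      have nnP: "(\<integral>\<^sup>+x. h x \<partial>P) = (\<integral>\<^sup>+x. R x * h x \<partial>Q)" if [measurable]: "h \<in> borel_measurable Q" for h
      proof -
        have "(\<integral>\<^sup>+x. h x \<partial>P) = (\<integral>\<^sup>+x. h x \<partial>density Q R)" using dens by simp
        also have "\<dots> = (\<integral>\<^sup>+x. R x * h x \<partial>Q)" by (subst nn_integral_density) auto
        finally show ?thesis .
      qed
      have fin_Q: "AE x in Q. R x \<noteq> \<infinity>" unfolding R_def
        using ac sets_eq by (intro Q.RN_deriv_finite) (auto simp: P.sigma_finite_measure)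
      have fin_P: "AE x in P. R x \<noteq> \<infinity>"
        by (rule absolutely_continuous_AE[OF sets_eq ac fin_Q])
      have nz_P: "AE x in P. R x \<noteq> 0"
      proof -
        have "AE x in density Q R. R x \<noteq> 0"
          by (subst AE_density) auto
        then show ?thesis by (simp only: dens)
      qed
      have fpos: "AE x in P. f x > 0"
        using fin_P nz_P by eventually_elim (auto simp: f_def enn2real_positive_iff less_top zero_less_iff_neq_zero)
      have f0: "f x \<ge> 0" for x by (simp add: f_def)
      have nnf: "(\<integral>\<^sup>+x. ennreal (f x) \<partial>Q) \<le> 1"
      proof -
        have "(\<integral>\<^sup>+x. ennreal (f x) \<partial>Q) \<le> (\<integral>\<^sup>+x. R x \<partial>Q)"
          by (intro nn_integral_mono) (simp add: f_def ennreal_enn2real_if)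
        also have "\<dots> = (\<integral>\<^sup>+x. R x * 1 \<partial>Q)" by simp
        also have "\<dots> = (\<integral>\<^sup>+x. 1 \<partial>P)" by (rule nnP[symmetric]) simp
        also have "\<dots> = 1" by (simp add: P.emeasure_space_1)
        finally show ?thesis .
      qed
      have int_fQ: "integrable Q f"
      proof (rule integrableI_nonneg)
        show "(\<integral>\<^sup>+x. ennreal (f x) \<partial>Q) < \<infinity>"
          using order.strict_trans1[OF nnf ennreal_one_less_top] by simp
      qed (use f0 in simp_all)
      have intf_le: "(\<integral>x. f x \<partial>Q) \<le> 1"
      proof -
        have "(\<integral>x. f x \<partial>Q) = enn2real (\<integral>\<^sup>+x. ennreal (f x) \<partial>Q)"
          by (rule integral_eq_nn_integral) (use f0 in auto)
        also have "\<dots> \<le> 1" using nnf by (intro enn2real_leI) auto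
        finally show ?thesis .
      qed
      define pos where "pos x = max (ln (f x)) 0" for x
      define neg where "neg x = max (- ln (f x)) 0" for x
      have pos_meas[measurable]: "pos \<in> borel_measurable P" unfolding pos_def by measurable
      have neg_meas[measurable]: "neg \<in> borel_measurable P" unfolding neg_def by measurable
      have negQ[measurable]: "neg \<in> borel_measurable Q" unfolding neg_def by measurable
      have pos0: "pos x \<ge> 0" and neg0: "neg x \<ge> 0" for x by (auto simp: pos_def neg_def)
      have nnneg: "(\<integral>\<^sup>+x. ennreal (neg x) \<partial>P) \<le> 1"
      proof -
        have "(\<integral>\<^sup>+x. ennreal (neg x) \<partial>P) = (\<integral>\<^sup>+x. R x * ennreal (neg x) \<partial>Q)"
          by (rule nnP) simp
        also have "\<dots> \<le> (\<integral>\<^sup>+x. 1 \<partial>Q)"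
        proof (intro nn_integral_mono)
          fix x show "R x * ennreal (neg x) \<le> 1"
          proof (cases "R x")
            case (real t)
            then have "f x = t" by (simp add: f_def)
            then have "t * neg x \<le> 1" using neg_xlnx_le[of t] real by (simp add: neg_def)
            then show ?thesis using real by (simp add: ennreal_mult''[symmetric] neg0 ennreal_le_1)
          next
            case top
            then show ?thesis by (simp add: f_def neg_def)
          qed
        qed
        also have "\<dots> = 1" by (simp add: Q.emeasure_space_1)
        finally show ?thesis .
      qed
      have int_neg: "integrable P neg"
      proof (rule integrableI_nonneg)
        show "(\<integral>\<^sup>+x. ennreal (neg x) \<partial>P) < \<infinity>"
          using order.strict_trans1[OF nnneg ennreal_one_less_top] by simp
      qed (use neg0 in simp_all)
      define Npos where "Npos = (\<integral>x. neg x \<partial>P)"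
      define gM where "gM M x = (if f x > 0 then max (- real M) (min (real M) (ln (f x))) else - real M)" for M :: nat and x
      have gM_meas[measurable]: "gM M \<in> borel_measurable Q" for M unfolding gM_def by measurable
      have gM_bnd: "\<bar>gM M x\<bar> \<le> real M" for M x by (auto simp: gM_def)
      have dv_gM: "dv P Q (gM M) \<ge> (\<integral>x. min (pos x) (real M) \<partial>P) - Npos - exp (- real M)" for M
      proof -
        have gMP[measurable]: "gM M \<in> borel_measurable P" using gM_meas sets_eq by (simp cong: measurable_cong_sets)
        have int_gM: "integrable Q (\<lambda>x. exp (gM M x))"
          by (rule intb[where B="exp (real M)"]) (use gM_bnd in \<open>auto simp: Q.finite_measure_axioms abs_le_iff\<close>)
        have pt: "exp (gM M x) \<le> f x + exp (- real M)" for x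
        proof (cases "f x > 0")
          case True
          have "gM M x \<le> max (- real M) (ln (f x))" using True by (auto simp: gM_def)
          then have "exp (gM M x) \<le> exp (max (- real M) (ln (f x)))" by simp
          also have "\<dots> \<le> f x + exp (- real M)" using True f0[of x] by (auto simp: max_def)
          finally show ?thesis .
        qed (use f0 in \<open>auto simp: gM_def\<close>)
        have Zle: "(\<integral>x. exp (gM M x) \<partial>Q) \<le> 1 + exp (- real M)"
        proof -
          have "(\<integral>x. exp (gM M x) \<partial>Q) \<le> (\<integral>x. f x + exp (- real M) \<partial>Q)"
            by (rule integral_mono) (use int_gM int_fQ pt in auto)
          also have "\<dots> = (\<integral>x. f x \<partial>Q) + exp (- real M)" using int_fQ by (simp add: Q.prob_space)
          finally show ?thesis using intf_le by simp
        qed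
        have Zpos: "0 < (\<integral>x. exp (gM M x) \<partial>Q)"
        proof -
          have "(\<integral>x. exp (- real M) \<partial>Q) \<le> (\<integral>x. exp (gM M x) \<partial>Q)"
            by (rule integral_mono) (use int_gM in \<open>auto simp: gM_def\<close>)
          then show ?thesis by (simp add: Q.prob_space) (meson exp_gt_zero less_le_trans)
        qed
        have lnZ: "ln (\<integral>x. exp (gM M x) \<partial>Q) \<le> exp (- real M)"
        proof -
          have "ln (\<integral>x. exp (gM M x) \<partial>Q) \<le> ln (1 + exp (- real M))"
            using Zle Zpos by (intro ln_mono) auto
          also have "\<dots> \<le> exp (- real M)" by (intro ln_add_one_self_le_self) simp
          finally show ?thesis .
        qed
        have int_min: "integrable P (\<lambda>x. min (pos x) (real M))"
          by (rule intb[where B="real M"]) (use pos0 in \<open>auto simp: P.finite_measure_axioms\<close>)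
        have int_gMP: "integrable P (gM M)"
          by (rule intb[where B="real M"]) (use gM_bnd in \<open>auto simp: P.finite_measure_axioms\<close>)
        have ptP: "AE x in P. min (pos x) (real M) - neg x \<le> gM M x"
          using fpos by eventually_elim (auto simp: gM_def pos_def neg_def)
        have "(\<integral>x. min (pos x) (real M) - neg x \<partial>P) \<le> (\<integral>x. gM M x \<partial>P)"
          by (rule integral_mono_AE) (use int_min int_neg int_gMP ptP in auto)
        then have "(\<integral>x. min (pos x) (real M) \<partial>P) - Npos \<le> (\<integral>x. gM M x \<partial>P)"
          using int_min int_neg by (simp add: Npos_def)
        then show ?thesis using lnZ by (simp add: dv_def)
      qed
      have mono_min: "(\<integral>x. min (pos x) (real M) \<partial>P) \<le> (\<integral>x. min (pos x) (real M') \<partial>P)" if "M \<le> M'" for M M'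
      proof (rule integral_mono)
        show "integrable P (\<lambda>x. min (pos x) (real M))"
          by (rule intb[where B="real M"]) (auto simp: P.finite_measure_axioms pos0)
        show "integrable P (\<lambda>x. min (pos x) (real M'))"
          by (rule intb[where B="real M'"]) (auto simp: P.finite_measure_axioms pos0)
      qed (use that in auto)
      have SUPpos: "(\<integral>\<^sup>+x. ennreal (pos x) \<partial>P) = (SUP M::nat. \<integral>\<^sup>+x. ennreal (min (pos x) (real M)) \<partial>P)"
      proof -
        have "(\<integral>\<^sup>+x. ennreal (pos x) \<partial>P) = (\<integral>\<^sup>+x. (SUP M::nat. ennreal (min (pos x) (real M))) \<partial>P)"
          by (simp add: SUP_min_ennreal pos0)
        also have "\<dots> = (SUP M::nat. \<integral>\<^sup>+x. ennreal (min (pos x) (real M)) \<partial>P)"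
          by (rule nn_integral_monotone_convergence_SUP) (auto simp: incseq_def le_fun_def intro!: ennreal_leI)
        finally show ?thesis .
      qed
      have nn_min: "(\<integral>\<^sup>+x. ennreal (min (pos x) (real M)) \<partial>P) = ennreal (\<integral>x. min (pos x) (real M) \<partial>P)" for M
        by (rule nn_integral_eq_integral) (auto intro!: intb[where B="real M"] simp: P.finite_measure_axioms pos0)
      have key: "\<exists>M0. \<forall>M\<ge>M0. c < (\<integral>x. min (pos x) (real M) \<partial>P)"
        if c: "c < 0 \<or> ennreal c < (\<integral>\<^sup>+x. ennreal (pos x) \<partial>P)" for c
      proof (cases "c < 0")
        case True
        have "0 \<le> (\<integral>x. min (pos x) (real M) \<partial>P)" for M by (rule Bochner_Integration.integral_nonneg) (auto simp: pos0)
        then show ?thesis using True by (intro exI[of _ 0]) (auto intro: less_le_trans)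
      next
        case False
        then have "ennreal c < (SUP M::nat. \<integral>\<^sup>+x. ennreal (min (pos x) (real M)) \<partial>P)" using c SUPpos by simp
        then obtain M0 where "ennreal c < ennreal (\<integral>x. min (pos x) (real M0) \<partial>P)"
          by (auto simp: less_SUP_iff nn_min)
        then have "c < (\<integral>x. min (pos x) (real M0) \<partial>P)"
          using False by (simp add: ennreal_less_iff)
        then show ?thesis using mono_min by (intro exI[of _ M0]) (auto intro: less_le_trans)
      qed
      have expM: "\<exists>M1. \<forall>M\<ge>M1. exp (- real M) < d" if "d > 0" for d :: real
      proof -
        obtain M1 :: nat where M1: "- ln d < real M1" using reals_Archimedean2 by blast
        have "exp (- real M) < d" if "M \<ge> M1" for M
        proof -
          have "- real M < ln d" using M1 that by linarith
          then have "exp (- real M) < exp (ln d)" by simp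
          then show ?thesis using \<open>d > 0\<close> by simp
        qed
        then show ?thesis by blast
      qed
      have final: "\<exists>g B. g \<in> borel_measurable Q \<and> (\<forall>x. \<bar>g x\<bar> \<le> B) \<and> y < ereal (dv P Q g)"
        if c: "c < 0 \<or> ennreal c < (\<integral>\<^sup>+x. ennreal (pos x) \<partial>P)" and d: "d > 0" and cd: "y0 \<le> c - Npos - d" for c d
      proof -
        obtain M0 where M0: "\<And>M. M \<ge> M0 \<Longrightarrow> c < (\<integral>x. min (pos x) (real M) \<partial>P)" using key[OF c] by blast
        obtain M1 where M1: "\<And>M. M \<ge> M1 \<Longrightarrow> exp (- real M) < d" using expM[OF d] by blast
        define M where "M = max M0 M1"
        have "c - Npos - d < dv P Q (gM M)"
          using M0[of M] M1[of M] dv_gM[of M] by (simp add: M_def)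
        then show ?thesis using cd real gM_meas[of M] gM_bnd[of M]
          by (intro exI[of _ "gM M"] exI[of _ "real M"]) auto
      qed
      show ?thesis
      proof (cases "integrable P (\<lambda>x. ln (f x))")
        case True
        have re: "rel_entropy P Q = ereal (\<integral>x. ln (f x) \<partial>P)"
          using True ac by (simp add: rel_entropy_def entropy_density_exp1 KL_divergence_def f_def R_def)
        have int_pos: "integrable P pos" unfolding pos_def using True by auto
        have lnsplit: "(\<integral>x. ln (f x) \<partial>P) = (\<integral>x. pos x \<partial>P) - Npos"
        proof -
          have "(\<lambda>x. ln (f x)) = (\<lambda>x. pos x - neg x)" by (auto simp: pos_def neg_def fun_eq_iff)
          then show ?thesis using int_pos int_neg by (simp add: Npos_def)
        qed
        define D where "D = (\<integral>x. ln (f x) \<partial>P)"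
        have yD: "y0 < D" using y real re by (simp add: D_def)
        define d where "d = (D - y0) / 3"
        have d0: "d > 0" using yD by (simp add: d_def)
        define c where "c = (\<integral>x. pos x \<partial>P) - d"
        have c: "c < 0 \<or> ennreal c < (\<integral>\<^sup>+x. ennreal (pos x) \<partial>P)"
        proof (cases "c < 0")
          case False
          have "(\<integral>\<^sup>+x. ennreal (pos x) \<partial>P) = ennreal (\<integral>x. pos x \<partial>P)"
            by (rule nn_integral_eq_integral) (use int_pos pos0 in auto)
          moreover have "ennreal c < ennreal (\<integral>x. pos x \<partial>P)"
            using False d0 by (subst ennreal_less_iff) (auto simp: c_def)
          ultimately show ?thesis by simp
        qed simp
        have "c - Npos - d = D - 2 * d" using lnsplit by (simp add: c_def D_def)
        also have "\<dots> = (D + 2 * y0) / 3" by (simp add: d_def field_simps)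
        finally have eqc: "c - Npos - d = (D + 2 * y0) / 3" .
        have "y0 \<le> (D + 2 * y0) / 3" using yD by (simp add: field_simps)
        then have "y0 \<le> c - Npos - d" by (simp only: eqc)
        then show ?thesis by (rule final[OF c d0])
      next
        case False
        have inf: "(\<integral>\<^sup>+x. ennreal (pos x) \<partial>P) = \<infinity>"
        proof (rule ccontr)
          assume "(\<integral>\<^sup>+x. ennreal (pos x) \<partial>P) \<noteq> \<infinity>"
          then have int_pos: "integrable P pos"
            by (intro integrableI_nonneg) (auto simp: pos0 top.not_eq_extremum)
          have "(\<lambda>x. ln (f x)) = (\<lambda>x. pos x - neg x)" by (auto simp: pos_def neg_def fun_eq_iff)
          then have "integrable P (\<lambda>x. ln (f x))" using int_pos int_neg by simp
          then show False using False by simp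
        qed
        show ?thesis
          by (rule final[of "y0 + Npos + 1" 1]) (auto simp: inf)
      qed
    qed
  qed
qed

definition clampM :: "real \<Rightarrow> real \<Rightarrow> real" where
  "clampM M y = max (- M) (min M y)"

lemma clampM_lip: "M \<ge> 0 \<Longrightarrow> \<bar>z\<bar> \<le> M \<Longrightarrow> \<bar>clampM M y - z\<bar> \<le> \<bar>y - z\<bar>"
  by (auto simp: clampM_def abs_le_iff max_def min_def)

type_synonym gidx = "nat \<times> nat \<times> nat \<times> nat list list"

definition Gfun :: "gidx \<Rightarrow> 'a::second_countable_topology \<Rightarrow> real" where
  "Gfun \<iota> x = (case \<iota> of (M, k, N, bss) \<Rightarrow>
     clampM (real M) (\<Sum>i<length bss. ((real i - real N) / real k) * indicator (Uset (bss ! i)) x))"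

lemma Gfun_meas[measurable]: "Gfun \<iota> \<in> borel_measurable borel"
  unfolding Gfun_def clampM_def by (cases \<iota>) simp

lemma Gfun_bnd: "\<bar>Gfun (M, k, N, bss) x\<bar> \<le> real M"
  unfolding Gfun_def clampM_def by auto

lemma exp_diff_le: "exp (h::real) - exp g \<le> exp h * (h - g)"
proof -
  have "1 + (g - h) \<le> exp (g - h)" by (rule exp_ge_add_one_self)
  then have "exp h * (1 + (g - h)) \<le> exp h * exp (g - h)" by (intro mult_left_mono) auto
  also have "\<dots> = exp g" by (simp add: exp_diff)
  finally show ?thesis by (simp add: algebra_simps)
qed

lemma dv_lip:
  fixes g h :: "'a \<Rightarrow> real"
  assumes P: "prob_space P" and Q: "prob_space Q" and sets_eq: "sets P = sets Q"
    and g[measurable]: "g \<in> borel_measurable Q" and h[measurable]: "h \<in> borel_measurable Q"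
    and gb: "\<And>x. \<bar>g x\<bar> \<le> B" and hb: "\<And>x. \<bar>h x\<bar> \<le> B"
  shows "dv P Q g - dv P Q h \<le> (\<integral>x. \<bar>g x - h x\<bar> \<partial>P) + exp (2 * B) * (\<integral>x. \<bar>g x - h x\<bar> \<partial>Q)"
proof -
  interpret P: prob_space P by fact
  interpret Q: prob_space Q by fact
  have gP[measurable]: "g \<in> borel_measurable P" using g sets_eq by (simp cong: measurable_cong_sets)
  have hP[measurable]: "h \<in> borel_measurable P" using h sets_eq by (simp cong: measurable_cong_sets)
  have B0: "B \<ge> 0" using gb[of undefined] by simp
  have igP: "integrable P g" by (rule intb[where B=B]) (use gb in \<open>auto simp: P.finite_measure_axioms\<close>)
  have ihP: "integrable P h" by (rule intb[where B=B]) (use hb in \<open>auto simp: P.finite_measure_axioms\<close>)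
  have iabsP: "integrable P (\<lambda>x. \<bar>g x - h x\<bar>)" using igP ihP by auto
  have egQ: "integrable Q (\<lambda>x. exp (g x))"
    by (rule intb[where B="exp B"]) (use gb in \<open>auto simp: Q.finite_measure_axioms abs_le_iff\<close>)
  have ehQ: "integrable Q (\<lambda>x. exp (h x))"
    by (rule intb[where B="exp B"]) (use hb in \<open>auto simp: Q.finite_measure_axioms abs_le_iff\<close>)
  have iabsQ: "integrable Q (\<lambda>x. \<bar>g x - h x\<bar>)"
  proof (rule intb[where B="2*B"])
    fix x show "\<bar>\<bar>g x - h x\<bar>\<bar> \<le> 2 * B" using gb[of x] hb[of x] by arith
  qed (auto simp: Q.finite_measure_axioms)
  define X where "X = (\<integral>x. exp (g x) \<partial>Q)"
  define Y where "Y = (\<integral>x. exp (h x) \<partial>Q)"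
  have Xge: "exp (- B) \<le> X"
  proof -
    have "(\<integral>x. exp (- B) \<partial>Q) \<le> X" unfolding X_def
      by (rule integral_mono) (use egQ gb in \<open>auto, metis abs_le_iff minus_le_iff\<close>)
    then show ?thesis by (simp add: Q.prob_space)
  qed
  have X0: "X > 0" using Xge by (meson exp_gt_zero less_le_trans)
  have Y0: "Y > 0"
  proof -
    have "(\<integral>x. exp (- B) \<partial>Q) \<le> Y" unfolding Y_def
      by (rule integral_mono) (use ehQ hb in \<open>auto, metis abs_le_iff minus_le_iff\<close>)
    then show ?thesis by (simp add: Q.prob_space) (meson exp_gt_zero less_le_trans)
  qed
  have 1: "(\<integral>x. g x \<partial>P) - (\<integral>x. h x \<partial>P) \<le> (\<integral>x. \<bar>g x - h x\<bar> \<partial>P)"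
  proof -
    have "(\<integral>x. g x \<partial>P) - (\<integral>x. h x \<partial>P) = (\<integral>x. g x - h x \<partial>P)" using igP ihP by simp
    also have "\<dots> \<le> (\<integral>x. \<bar>g x - h x\<bar> \<partial>P)" by (rule integral_mono) (use igP ihP iabsP in auto)
    finally show ?thesis .
  qed
  have YX: "Y - X \<le> exp B * (\<integral>x. \<bar>g x - h x\<bar> \<partial>Q)"
  proof -
    have pt: "exp (h x) - exp (g x) \<le> exp B * \<bar>g x - h x\<bar>" for x
    proof (cases "h x \<ge> g x")
      case True
      have "exp (h x) - exp (g x) \<le> exp (h x) * (h x - g x)" by (rule exp_diff_le)
      also have "\<dots> \<le> exp B * (h x - g x)" using True hb[of x] by (intro mult_right_mono) (auto simp: abs_le_iff)
      finally show ?thesis using True by simp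
    next
      case False
      then show ?thesis by (simp add: order.trans[OF _ mult_nonneg_nonneg])
    qed
    have "Y - X = (\<integral>x. exp (h x) - exp (g x) \<partial>Q)" using egQ ehQ by (simp add: X_def Y_def)
    also have "\<dots> \<le> (\<integral>x. exp B * \<bar>g x - h x\<bar> \<partial>Q)"
      by (rule integral_mono) (use egQ ehQ iabsQ pt in auto)
    also have "\<dots> = exp B * (\<integral>x. \<bar>g x - h x\<bar> \<partial>Q)" by simp
    finally show ?thesis .
  qed
  have 2: "ln Y - ln X \<le> exp (2 * B) * (\<integral>x. \<bar>g x - h x\<bar> \<partial>Q)"
  proof -
    have I0: "(\<integral>x. \<bar>g x - h x\<bar> \<partial>Q) \<ge> 0" by (rule Bochner_Integration.integral_nonneg) auto
    have "ln Y - ln X = ln (Y / X)" using X0 Y0 by (simp add: ln_div)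
    also have "\<dots> \<le> Y / X - 1" using X0 Y0 by (intro ln_le_minus_one) auto
    also have "\<dots> = (Y - X) / X" using X0 by (simp add: field_simps)
    also have "\<dots> \<le> exp B * max (Y - X) 0"
    proof (cases "Y - X \<ge> 0")
      case True
      have "1 / X \<le> exp B"
      proof -
        have "1 / X \<le> 1 / exp (- B)" using Xge X0 by (intro divide_left_mono) auto
        then show ?thesis by (simp add: exp_minus divide_inverse)
      qed
      then have "(Y - X) * (1 / X) \<le> (Y - X) * exp B" using True by (intro mult_left_mono) auto
      then show ?thesis using True by (simp add: algebra_simps)
    next
      case False
      then have "(Y - X) / X \<le> 0" using X0 by (simp add: divide_nonpos_pos)
      then show ?thesis using False by simp
    qed
    also have "\<dots> \<le> exp B * (exp B * (\<integral>x. \<bar>g x - h x\<bar> \<partial>Q))"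
      using YX I0 by (intro mult_left_mono) auto
    also have "\<dots> = exp (2 * B) * (\<integral>x. \<bar>g x - h x\<bar> \<partial>Q)"
      by (metis exp_add mult_2 mult.assoc)
    finally show ?thesis .
  qed
  show ?thesis using 1 2 by (simp add: dv_def X_def Y_def)
qed

lemma half_aux: "(a::real) \<noteq> 0 \<Longrightarrow> x / (2 * a) * a = x / 2" by (simp add: field_simps)

lemma approx_dv:
  fixes P Q :: "'a::polish_space measure" and g :: "'a \<Rightarrow> real" and M :: nat
  assumes P: "prob_space P" "sets P = sets borel" and Q: "prob_space Q" "sets Q = sets borel"
    and g[measurable]: "g \<in> borel_measurable borel" and gb: "\<And>x. \<bar>g x\<bar> \<le> real M" and e: "\<epsilon> > 0"
  shows "\<exists>\<iota>. dv P Q g - \<epsilon> < dv P Q (Gfun \<iota>)"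
proof -
  interpret P: prob_space P by fact
  interpret Q: prob_space Q by fact
  define \<delta> where "\<delta> = \<epsilon> / (2 * (1 + exp (2 * real M)))"
  have \<delta>0: "\<delta> > 0" using e by (simp add: \<delta>_def add_pos_pos)
  obtain k :: nat where k: "2 / \<delta> < real k" using reals_Archimedean2 by blast
  have "2 / \<delta> > 0" using \<delta>0 by simp
  then have kpos: "real k > 0" using k by linarith
  then have k0: "k > 0" by simp
  have kd: "1 / real k < \<delta> / 2"
  proof -
    have "2 < \<delta> * real k" using k \<delta>0 by (simp add: field_simps)
    then show ?thesis using kpos \<delta>0 by (simp add: field_simps)
  qed
  define N where "N = M * k"
  define L where "L = 2 * N + 1"
  define C where "C i = {x. real_of_int \<lfloor>real k * g x\<rfloor> = real i - real N}" for i :: nat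
  have C_borel: "C i \<in> sets borel" for i unfolding C_def by measurable
  define \<eta> where "\<eta> = \<delta> / (2 * (real M + 1) * real L)"
  have L0: "real L > 0" by (simp add: L_def)
  have \<eta>0: "\<eta> > 0" using \<delta>0 L0 by (simp add: \<eta>_def)
  have "\<forall>i. \<exists>bs. measure P ((C i - Uset bs) \<union> (Uset bs - C i)) < \<eta> \<and> measure Q ((C i - Uset bs) \<union> (Uset bs - C i)) < \<eta>"
    using approx_set[OF P.finite_measure_axioms P(2) Q.finite_measure_axioms Q(2) C_borel \<eta>0] by blast
  then obtain \<beta> where \<beta>: "\<And>i. measure P ((C i - Uset (\<beta> i)) \<union> (Uset (\<beta> i) - C i)) < \<eta>"
      "\<And>i. measure Q ((C i - Uset (\<beta> i)) \<union> (Uset (\<beta> i) - C i)) < \<eta>"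
    by metis
  define bss where "bss = map \<beta> [0..<L]"
  define \<iota> where "\<iota> = (M, k, N, bss)"
  define c where "c i = (real i - real N) / real k" for i :: nat
  define D where "D i = (C i - Uset (\<beta> i)) \<union> (Uset (\<beta> i) - C i)" for i
  have D_borel: "D i \<in> sets borel" for i unfolding D_def using C_borel by auto
  have G\<iota>: "Gfun \<iota> x = clampM (real M) (\<Sum>i<L. c i * indicator (Uset (\<beta> i)) x)" for x
  proof -
    have "(\<Sum>i<length bss. (real i - real N) / real k * indicator (Uset (bss ! i)) x)
        = (\<Sum>i<L. c i * indicator (Uset (\<beta> i)) x)"
      unfolding bss_def c_def by (intro sum.cong) auto
    then show ?thesis by (simp add: Gfun_def \<iota>_def)
  qed
  have T: "(\<Sum>i<L. c i * indicator (C i) x) = real_of_int \<lfloor>real k * g x\<rfloor> / real k"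
    and Tg: "\<bar>real_of_int \<lfloor>real k * g x\<rfloor> / real k - g x\<bar> \<le> 1 / real k" for x
  proof -
    define m where "m = \<lfloor>real k * g x\<rfloor>"
    have kg: "\<bar>real k * g x\<bar> \<le> real N"
    proof -
      have "\<bar>real k * g x\<bar> = real k * \<bar>g x\<bar>" by (simp add: abs_mult)
      also have "\<dots> \<le> real k * real M" using gb[of x] by (intro mult_left_mono) auto
      finally show ?thesis by (simp add: N_def mult.commute)
    qed
    have m1: "real_of_int m \<le> real k * g x" and m2: "real k * g x < real_of_int m + 1"
      unfolding m_def by linarith+
    have mlo: "- int N \<le> m"
    proof -
      have "- real N \<le> real k * g x" using kg by (simp add: abs_le_iff)
      then show ?thesis unfolding m_def by (simp add: le_floor_iff)
    qed
    have mhi: "m \<le> int N"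
    proof -
      have "real_of_int m \<le> real N" using m1 kg by (simp add: abs_le_iff)
      then show ?thesis by simp
    qed
    define i0 where "i0 = nat (m + int N)"
    have i0L: "i0 < L" using mhi mlo by (simp add: i0_def L_def)
    have i0r: "real i0 = real_of_int m + real N" using mlo by (simp add: i0_def)
    have ind: "indicator (C i) x = (if i = i0 then 1 else (0::real))" for i
    proof -
      have "x \<in> C i \<longleftrightarrow> real_of_int m = real i - real N" by (simp add: C_def m_def)
      also have "\<dots> \<longleftrightarrow> m = int i - int N" by linarith
      also have "\<dots> \<longleftrightarrow> i = i0" using mlo by (auto simp: i0_def)
      finally show ?thesis by (simp add: indicator_def)
    qed
    have "(\<Sum>i<L. c i * indicator (C i) x) = (\<Sum>i<L. if i = i0 then c i else 0)"
      by (rule sum.cong) (auto simp: ind)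
    also have "\<dots> = c i0" using i0L by (simp add: sum.delta)
    also have "\<dots> = real_of_int m / real k" by (simp add: c_def i0r)
    finally show "(\<Sum>i<L. c i * indicator (C i) x) = real_of_int \<lfloor>real k * g x\<rfloor> / real k" by (simp add: m_def)
    have eqd: "g x - real_of_int m / real k = (real k * g x - real_of_int m) / real k"
      using kpos by (simp add: field_simps)
    have "0 \<le> g x - real_of_int m / real k" unfolding eqd using m1 kpos by simp
    moreover have "g x - real_of_int m / real k \<le> 1 / real k" unfolding eqd
      using m2 kpos by (intro divide_right_mono) auto
    ultimately show "\<bar>real_of_int \<lfloor>real k * g x\<rfloor> / real k - g x\<bar> \<le> 1 / real k" by (simp add: m_def)
  qed
  have cb: "\<bar>c i\<bar> \<le> real M" if "i < L" for i
  proof -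
    have "\<bar>real i - real N\<bar> \<le> real N" using that by (simp add: L_def)
    then have "\<bar>real i - real N\<bar> / real k \<le> real N / real k" using kpos by (intro divide_right_mono) auto
    then show ?thesis using kpos by (simp add: c_def N_def abs_divide)
  qed
  have ptw: "\<bar>g x - Gfun \<iota> x\<bar> \<le> 1 / real k + real M * (\<Sum>i<L. indicator (D i) x)" for x
  proof -
    define S where "S = (\<Sum>i<L. c i * indicator (Uset (\<beta> i)) x)"
    define T where "T = (\<Sum>i<L. c i * indicator (C i) x)"
    have "\<bar>S - T\<bar> = \<bar>\<Sum>i<L. c i * (indicator (Uset (\<beta> i)) x - indicator (C i) x)\<bar>"
      unfolding S_def T_def by (simp only: sum_subtractf[symmetric] right_diff_distrib)
    also have "\<dots> \<le> (\<Sum>i<L. \<bar>c i * (indicator (Uset (\<beta> i)) x - indicator (C i) x)\<bar>)" by (rule sum_abs)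
    also have "\<dots> \<le> (\<Sum>i<L. real M * indicator (D i) x)"
    proof (rule sum_mono)
      fix i assume "i \<in> {..<L}"
      then have "\<bar>c i\<bar> \<le> real M" using cb by simp
      moreover have "\<bar>indicator (Uset (\<beta> i)) x - indicator (C i) x\<bar> = (indicator (D i) x :: real)"
        by (auto simp: D_def indicator_def)
      ultimately show "\<bar>c i * (indicator (Uset (\<beta> i)) x - indicator (C i) x)\<bar> \<le> real M * indicator (D i) x"
        by (simp add: abs_mult mult_right_mono)
    qed
    also have "\<dots> = real M * (\<Sum>i<L. indicator (D i) x)" by (simp add: sum_distrib_left)
    finally have ST: "\<bar>S - T\<bar> \<le> real M * (\<Sum>i<L. indicator (D i) x)" .
    have Tg': "\<bar>T - g x\<bar> \<le> 1 / real k" using T[of x] Tg[of x] by (simp add: T_def)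
    have "\<bar>Gfun \<iota> x - g x\<bar> \<le> \<bar>S - g x\<bar>" unfolding G\<iota> S_def[symmetric]
      by (rule clampM_lip) (use gb[of x] in auto)
    then show ?thesis using ST Tg' by (simp add: abs_minus_commute)
  qed
  have ib: "(\<integral>x. \<bar>g x - Gfun \<iota> x\<bar> \<partial>R) < \<delta>" if R: "prob_space R" "sets R = sets borel"
      and Rs: "\<And>i. measure R (D i) < \<eta>" for R
  proof -
    interpret R: prob_space R by fact
    have [measurable]: "D i \<in> sets R" for i using D_borel R(2) by simp
    have Gm[measurable]: "Gfun \<iota> \<in> borel_measurable R" using R(2) by (simp cong: measurable_cong_sets)
    have gm[measurable]: "g \<in> borel_measurable R" using R(2) by (simp cong: measurable_cong_sets)
    have i1: "integrable R (\<lambda>x. \<bar>g x - Gfun \<iota> x\<bar>)"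
    proof (rule intb[where B="2 * real M"])
      fix x show "\<bar>\<bar>g x - Gfun \<iota> x\<bar>\<bar> \<le> 2 * real M"
        using gb[of x] Gfun_bnd[of M k N bss x] by (simp add: \<iota>_def)
    qed (auto simp: R.finite_measure_axioms)
    have i2: "integrable R (\<lambda>x. 1 / real k + real M * (\<Sum>i<L. indicator (D i) x))"
      by (simp add: R.emeasure_eq_measure)
    have "(\<integral>x. \<bar>g x - Gfun \<iota> x\<bar> \<partial>R) \<le> (\<integral>x. 1 / real k + real M * (\<Sum>i<L. indicator (D i) x) \<partial>R)"
      by (rule integral_mono[OF i1 i2 ptw])
    also have "\<dots> = 1 / real k + real M * (\<Sum>i<L. measure R (D i))"
      by (simp add: R.emeasure_eq_measure R.prob_space integral_sum)
    also have "(\<Sum>i<L. measure R (D i)) \<le> (\<Sum>i<L. \<eta>)"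
      by (rule sum_mono) (use Rs in \<open>auto intro: less_imp_le\<close>)
    also have "(\<Sum>i<L. \<eta>) = real L * \<eta>" by simp
    finally have "(\<integral>x. \<bar>g x - Gfun \<iota> x\<bar> \<partial>R) \<le> 1 / real k + real M * (real L * \<eta>)"
      by (simp add: mult_left_mono)
    also have "real M * (real L * \<eta>) = \<delta> * real M / (2 * (real M + 1))"
    proof -
      have "\<eta> = (\<delta> / (2 * (real M + 1))) / real L" unfolding \<eta>_def by (simp add: divide_divide_eq_left)
      then have "real L * \<eta> = \<delta> / (2 * (real M + 1))" using L0 by simp
      then show ?thesis by simp
    qed
    also have "\<dots> < \<delta> / 2"
    proof -
      have "real M / (real M + 1) < 1" by simp
      then have "\<delta> * (real M / (real M + 1)) < \<delta> * 1" using \<delta>0 by (intro mult_strict_left_mono) auto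
      then show ?thesis by (simp add: field_simps)
    qed
    finally show ?thesis using kd by linarith
  qed
  have ibP: "(\<integral>x. \<bar>g x - Gfun \<iota> x\<bar> \<partial>P) < \<delta>" by (rule ib[OF P]) (use \<beta>(1) in \<open>simp add: D_def\<close>)
  have ibQ: "(\<integral>x. \<bar>g x - Gfun \<iota> x\<bar> \<partial>Q) < \<delta>" by (rule ib[OF Q]) (use \<beta>(2) in \<open>simp add: D_def\<close>)
  have gQ: "g \<in> borel_measurable Q" using Q(2) by (simp cong: measurable_cong_sets)
  have GQ: "Gfun \<iota> \<in> borel_measurable Q" using Q(2) by (simp cong: measurable_cong_sets)
  have "dv P Q g - dv P Q (Gfun \<iota>) \<le> (\<integral>x. \<bar>g x - Gfun \<iota> x\<bar> \<partial>P) + exp (2 * real M) * (\<integral>x. \<bar>g x - Gfun \<iota> x\<bar> \<partial>Q)"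
    by (rule dv_lip[OF P(1) Q(1) _ gQ GQ gb]) (use P(2) Q(2) Gfun_bnd in \<open>auto simp: \<iota>_def\<close>)
  also have "\<dots> \<le> \<delta> + exp (2 * real M) * \<delta>"
    using ibP ibQ by (intro add_mono mult_left_mono) auto
  also have "\<dots> = \<delta> * (1 + exp (2 * real M))" by (simp add: algebra_simps)
  also have "\<dots> = \<epsilon> / 2"
  proof -
    have pe: "1 + exp (2 * real M) \<noteq> 0" by (metis add_pos_pos exp_gt_zero less_irrefl zero_less_one)
    show ?thesis unfolding \<delta>_def by (rule half_aux[OF pe])
  qed
  finally show ?thesis using e by (intro exI[of _ \<iota>]) linarith
qed

lemma re_SUP:
  fixes P Q :: "'a::polish_space measure"
  assumes P: "prob_space P" "sets P = sets borel" and Q: "prob_space Q" "sets Q = sets borel"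
  shows "rel_entropy P Q = (SUP \<iota>. ereal (dv P Q (Gfun \<iota>)))"
proof (rule antisym)
  have sets_eq: "sets P = sets Q" using P Q by simp
  show "rel_entropy P Q \<le> (SUP \<iota>. ereal (dv P Q (Gfun \<iota>)))"
    unfolding le_SUP_iff
  proof (intro allI impI)
    fix y assume y: "y < rel_entropy P Q"
    obtain g B where g: "g \<in> borel_measurable Q" "\<forall>x. \<bar>g x\<bar> \<le> B" "y < ereal (dv P Q g)"
      using dv2[OF P(1) Q(1) sets_eq y] by blast
    show "\<exists>\<iota>\<in>UNIV. y < ereal (dv P Q (Gfun \<iota>))"
    proof (cases y)
      case MInf then show ?thesis by simp
    next
      case PInf then show ?thesis using g(3) by simp
    next
      case (real y0)
      define M where "M = nat \<lceil>B\<rceil>"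
      have gb: "\<bar>g x\<bar> \<le> real M" for x using g(2)[rule_format, of x] unfolding M_def by linarith
      have gm: "g \<in> borel_measurable borel" using g(1) Q(2) by (simp cong: measurable_cong_sets)
      have e: "dv P Q g - y0 > 0" using g(3) real by simp
      obtain \<iota> where "dv P Q g - (dv P Q g - y0) < dv P Q (Gfun \<iota>)"
        using approx_dv[OF P Q gm gb e] by blast
      then show ?thesis using real by (intro bexI[of _ \<iota>]) auto
    qed
  qed
  show "(SUP \<iota>. ereal (dv P Q (Gfun \<iota>))) \<le> rel_entropy P Q"
  proof (rule SUP_least)
    fix \<iota> :: gidx
    obtain M k N bss where \<iota>: "\<iota> = (M, k, N, bss)" by (cases \<iota>) auto
    have "Gfun \<iota> \<in> borel_measurable Q" using Q(2) by (simp cong: measurable_cong_sets)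
    then show "ereal (dv P Q (Gfun \<iota>)) \<le> rel_entropy P Q"
      by (rule gibbs[OF P(1) Q(1) sets_eq, where B="real M"]) (simp add: \<iota> Gfun_bnd)
  qed
qed

lemma Psi_meas[measurable]: "Psi \<in> borel_measurable borel"
  unfolding Psi_def by measurable

lemma meas_Psi_re:
  fixes \<kappa> :: "'z \<Rightarrow> 'a::polish_space measure"
  assumes \<kappa>: "\<kappa> \<in> measurable PZ (prob_algebra borel)" and Q: "prob_space Q" "sets Q = sets borel"
  shows "(\<lambda>z. Psi (rel_entropy (\<kappa> z) Q)) \<in> borel_measurable PZ"
proof -
  have sp: "prob_space (\<kappa> z) \<and> sets (\<kappa> z) = sets borel" if "z \<in> space PZ" for z
    using measurable_space[OF \<kappa> that] by (simp add: space_prob_algebra)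
  have im[measurable]: "(\<lambda>z. integral\<^sup>L (\<kappa> z) (Gfun \<iota>)) \<in> borel_measurable PZ" for \<iota>
    by (rule measurable_compose[OF measurable_prob_algebraD[OF \<kappa>] integral_measurable_subprob_algebra[OF Gfun_meas]])
  have "(\<lambda>z. SUP \<iota>. ereal (dv (\<kappa> z) Q (Gfun \<iota>))) \<in> borel_measurable PZ"
    unfolding dv_def by (rule borel_measurable_SUP) (auto intro: countableI_type)
  moreover have "rel_entropy (\<kappa> z) Q = (SUP \<iota>. ereal (dv (\<kappa> z) Q (Gfun \<iota>)))" if z: "z \<in> space PZ" for z
    using sp[OF z] by (intro re_SUP Q) auto
  ultimately have "(\<lambda>z. rel_entropy (\<kappa> z) Q) \<in> borel_measurable PZ"
    by (subst measurable_cong) auto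
  then show ?thesis by measurable
qed

lemma meas_tv:
  fixes \<kappa> :: "'z \<Rightarrow> 'a::polish_space measure"
  assumes \<kappa>: "\<kappa> \<in> measurable PZ (prob_algebra borel)" and Q: "prob_space Q" "sets Q = sets borel"
  shows "(\<lambda>z. tv_dist (\<kappa> z) Q) \<in> borel_measurable PZ"
proof -
  have sp: "prob_space (\<kappa> z) \<and> sets (\<kappa> z) = sets borel" if "z \<in> space PZ" for z
    using measurable_space[OF \<kappa> that] by (simp add: space_prob_algebra)
  have im[measurable]: "(\<lambda>z. measure (\<kappa> z) (Uset bs)) \<in> borel_measurable PZ" for bs
    by (rule measurable_compose[OF \<kappa> measurable_measure_prob_algebra[OF Uset_borel]])
  have "(\<lambda>z. SUP bs. measure (\<kappa> z) (Uset bs) - measure Q (Uset bs)) \<in> borel_measurable PZ"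
  proof (rule borel_measurable_cSUP)
    fix z assume z: "z \<in> space PZ"
    interpret K: prob_space "\<kappa> z" using sp[OF z] by simp
    show "bdd_above (range (\<lambda>bs. measure (\<kappa> z) (Uset bs) - measure Q (Uset bs)))"
    proof (rule bdd_aboveI[where M=1])
      fix y assume "y \<in> range (\<lambda>bs. measure (\<kappa> z) (Uset bs) - measure Q (Uset bs))"
      then obtain B where "y = measure (\<kappa> z) (Uset B) - measure Q (Uset B)" by auto
      then show "y \<le> 1" using K.prob_le_1[of "Uset B"] measure_nonneg[of Q "Uset B"] by linarith
    qed
  qed (auto intro: countableI_type)
  moreover have "tv_dist (\<kappa> z) Q = (SUP bs. measure (\<kappa> z) (Uset bs) - measure Q (Uset bs))" if z: "z \<in> space PZ" for z
    using sp[OF z] by (intro tv_Uset Q) auto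
  ultimately show ?thesis by (subst measurable_cong) auto
qed

lemma kernel1_meas:
  fixes PZ :: "'z measure" and K :: "(nat \<Rightarrow> 'z) \<Rightarrow> 'w measure"
  assumes K: "K \<in> PiM {..<n} (\<lambda>_. PZ) \<rightarrow>\<^sub>M prob_algebra W" and i: "i < n"
  shows "(\<lambda>s. distr (K s) (W \<Otimes>\<^sub>M PZ) (\<lambda>w. (w, s i))) \<in> PiM {..<n} (\<lambda>_. PZ) \<rightarrow>\<^sub>M prob_algebra (W \<Otimes>\<^sub>M PZ)"
proof (rule measurable_distr_prob_space2[OF K])
  have [measurable]: "i \<in> {..<n}" using i by simp
  show "(\<lambda>(s, w). (w, s i)) \<in> PiM {..<n} (\<lambda>_. PZ) \<Otimes>\<^sub>M W \<rightarrow>\<^sub>M W \<Otimes>\<^sub>M PZ"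
    by measurable
qed

lemma kernel2_meas:
  fixes PZ :: "'z measure" and \<kappa> :: "'z \<Rightarrow> 'w measure"
  assumes \<kappa>: "\<kappa> \<in> PZ \<rightarrow>\<^sub>M prob_algebra W"
  shows "(\<lambda>z. distr (\<kappa> z) (W \<Otimes>\<^sub>M PZ) (\<lambda>w. (w, z))) \<in> PZ \<rightarrow>\<^sub>M prob_algebra (W \<Otimes>\<^sub>M PZ)"
proof (rule measurable_distr_prob_space2[OF \<kappa>])
  show "(\<lambda>(z, w). (w, z)) \<in> PZ \<Otimes>\<^sub>M W \<rightarrow>\<^sub>M W \<Otimes>\<^sub>M PZ"
    by measurable
qed

lemma kernel_space:
  assumes "K \<in> M \<rightarrow>\<^sub>M prob_algebra W" "x \<in> space M"
  shows "prob_space (K x)" "sets (K x) = sets W" "space (K x) = space W"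
proof -
  have h: "sets (K x) = sets W \<and> prob_space (K x)" using measurable_space[OF assms] by (simp add: space_prob_algebra)
  then show "prob_space (K x)" "sets (K x) = sets W" by auto
  show "space (K x) = space W" using h sets_eq_imp_space_eq by blast
qed

lemma integral_k1:
  fixes F :: "'w \<Rightarrow> 'z \<Rightarrow> real"
  assumes K: "K \<in> M \<rightarrow>\<^sub>M prob_algebra W" and x: "x \<in> space M" and zx: "z \<in> space PZ"
    and F[measurable]: "(\<lambda>(w, z). F w z) \<in> borel_measurable (W \<Otimes>\<^sub>M PZ)"
  shows "(\<integral>p. (case p of (w, z) \<Rightarrow> F w z) \<partial>distr (K x) (W \<Otimes>\<^sub>M PZ) (\<lambda>w. (w, z))) = (\<integral>w. F w z \<partial>K x)"
proof -
  have m: "(\<lambda>w. (w, z)) \<in> K x \<rightarrow>\<^sub>M W \<Otimes>\<^sub>M PZ"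
    using measurable_Pair2'[OF zx, of W] kernel_space(2)[OF K x] by (simp cong: measurable_cong_sets)
  show ?thesis by (subst integral_distr[OF m F]) simp
qed

lemma joint_law:
  fixes PZ :: "'z measure" and K :: "(nat \<Rightarrow> 'z) \<Rightarrow> 'w measure" and \<kappa> :: "'z \<Rightarrow> 'w measure"
    and F :: "'w \<Rightarrow> 'z \<Rightarrow> real"
  assumes PZ: "prob_space PZ"
    and K: "K \<in> PiM {..<n} (\<lambda>_. PZ) \<rightarrow>\<^sub>M prob_algebra W"
    and \<kappa>: "\<kappa> \<in> PZ \<rightarrow>\<^sub>M prob_algebra W" and i: "i < n"
    and cond: "\<And>A B. A \<in> sets PZ \<Longrightarrow> B \<in> sets W \<Longrightarrow>
        (\<integral>s. indicator A (s i) * measure (K s) B \<partial>(PiM {..<n} (\<lambda>_. PZ)))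
          = (\<integral>z. indicator A z * measure (\<kappa> z) B \<partial>PZ)"
    and F[measurable]: "(\<lambda>(w, z). F w z) \<in> borel_measurable (W \<Otimes>\<^sub>M PZ)"
    and Fb: "\<And>w z. z \<in> space PZ \<Longrightarrow> \<bar>F w z\<bar> \<le> C"
  shows "(\<integral>s. (\<integral>w. F w (s i) \<partial>K s) \<partial>(PiM {..<n} (\<lambda>_. PZ))) = (\<integral>z. (\<integral>w. F w z \<partial>\<kappa> z) \<partial>PZ)"
    and "(\<lambda>s. \<integral>w. F w (s i) \<partial>K s) \<in> borel_measurable (PiM {..<n} (\<lambda>_. PZ))"
    and "(\<lambda>z. \<integral>w. F w z \<partial>\<kappa> z) \<in> borel_measurable PZ"
proof -
  define S where "S = PiM {..<n} (\<lambda>_. PZ)"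
  interpret PZ: prob_space PZ by fact
  interpret S: prob_space S unfolding S_def by (intro prob_space_PiM PZ)
  define N where "N = W \<Otimes>\<^sub>M PZ"
  define k1 where "k1 s = distr (K s) N (\<lambda>w. (w, s i))" for s
  define k2 where "k2 z = distr (\<kappa> z) N (\<lambda>w. (w, z))" for z
  have K': "K \<in> S \<rightarrow>\<^sub>M prob_algebra W" using K by (simp add: S_def)
  have k1m: "k1 \<in> S \<rightarrow>\<^sub>M prob_algebra N" unfolding k1_def N_def S_def by (rule kernel1_meas[OF K i])
  have k2m: "k2 \<in> PZ \<rightarrow>\<^sub>M prob_algebra N" unfolding k2_def N_def by (rule kernel2_meas[OF \<kappa>])
  have si: "s i \<in> space PZ" if "s \<in> space S" for s using that i by (auto simp: S_def space_PiM)
  have FN[measurable]: "(\<lambda>(w, z). F w z) \<in> borel_measurable N" unfolding N_def by (rule F)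
  have eq1: "(\<integral>p. (case p of (w, z) \<Rightarrow> F w z) \<partial>k1 s) = (\<integral>w. F w (s i) \<partial>K s)" if "s \<in> space S" for s
    unfolding k1_def N_def by (rule integral_k1[OF K' that si[OF that] F])
  have eq2: "(\<integral>p. (case p of (w, z) \<Rightarrow> F w z) \<partial>k2 z) = (\<integral>w. F w z \<partial>\<kappa> z)" if "z \<in> space PZ" for z
    unfolding k2_def N_def by (rule integral_k1[OF \<kappa> that that F])
  have m1: "(\<lambda>s. \<integral>p. (case p of (w, z) \<Rightarrow> F w z) \<partial>k1 s) \<in> borel_measurable S"
    by (rule measurable_compose[OF measurable_prob_algebraD[OF k1m] integral_measurable_subprob_algebra[OF FN]])
  have m2: "(\<lambda>z. \<integral>p. (case p of (w, z) \<Rightarrow> F w z) \<partial>k2 z) \<in> borel_measurable PZ"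
    by (rule measurable_compose[OF measurable_prob_algebraD[OF k2m] integral_measurable_subprob_algebra[OF FN]])
  show "(\<lambda>s. \<integral>w. F w (s i) \<partial>K s) \<in> borel_measurable (PiM {..<n} (\<lambda>_. PZ))"
    using m1 eq1 unfolding S_def[symmetric] by (subst measurable_cong[symmetric]) auto
  show "(\<lambda>z. \<integral>w. F w z \<partial>\<kappa> z) \<in> borel_measurable PZ"
    using m2 eq2 by (subst measurable_cong[symmetric]) auto
  have S_in: "S \<in> space (prob_algebra S)" by (simp add: space_prob_algebra S.prob_space_axioms)
  have PZ_in: "PZ \<in> space (prob_algebra PZ)" by (simp add: space_prob_algebra PZ.prob_space_axioms)
  define \<nu>1 where "\<nu>1 = S \<bind> k1"
  define \<nu>2 where "\<nu>2 = PZ \<bind> k2"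
  have s1: "sets \<nu>1 = sets N" unfolding \<nu>1_def by (rule sets_bind'[OF S_in k1m])
  have s2: "sets \<nu>2 = sets N" unfolding \<nu>2_def by (rule sets_bind'[OF PZ_in k2m])
  have p1: "prob_space \<nu>1" unfolding \<nu>1_def by (rule prob_space_bind'[OF S_in k1m])
  have rect1: "emeasure \<nu>1 (B \<times> A) = ennreal (\<integral>s. indicator A (s i) * measure (K s) B \<partial>S)"
    if A: "A \<in> sets PZ" and B: "B \<in> sets W" for A B
  proof -
    have BA: "B \<times> A \<in> sets N" unfolding N_def using A B by simp
    have "emeasure \<nu>1 (B \<times> A) = (\<integral>\<^sup>+s. emeasure (k1 s) (B \<times> A) \<partial>S)"
      unfolding \<nu>1_def by (rule emeasure_bind_prob_algebra[OF S_in k1m BA])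
    also have "\<dots> = (\<integral>\<^sup>+s. ennreal (indicator A (s i) * measure (K s) B) \<partial>S)"
    proof (rule nn_integral_cong)
      fix s assume s: "s \<in> space S"
      interpret Ks: prob_space "K s" using kernel_space(1)[OF K' s] .
      have spK: "space (K s) = space W" using kernel_space(3)[OF K' s] .
      have BK: "B \<in> sets (K s)" using kernel_space(2)[OF K' s] B by simp
      have mm: "(\<lambda>w. (w, s i)) \<in> K s \<rightarrow>\<^sub>M N"
        using measurable_Pair2'[OF si[OF s], of W] kernel_space(2)[OF K' s] by (simp add: N_def cong: measurable_cong_sets)
      have "emeasure (k1 s) (B \<times> A) = emeasure (K s) ((\<lambda>w. (w, s i)) -` (B \<times> A) \<inter> space (K s))"
        unfolding k1_def by (rule emeasure_distr[OF mm BA])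
      also have "(\<lambda>w. (w, s i)) -` (B \<times> A) \<inter> space (K s) = (if s i \<in> A then B else {})"
        using sets.sets_into_space[OF B] spK by auto
      finally show "emeasure (k1 s) (B \<times> A) = ennreal (indicator A (s i) * measure (K s) B)"
        by (simp add: Ks.emeasure_eq_measure indicator_def)
    qed
    also have "\<dots> = ennreal (\<integral>s. indicator A (s i) * measure (K s) B \<partial>S)"
    proof (rule nn_integral_eq_integral)
      have [measurable]: "(\<lambda>s. measure (K s) B) \<in> borel_measurable S"
        by (rule measurable_compose[OF K' measurable_measure_prob_algebra[OF B]])
      have [measurable]: "i \<in> {..<n}" using i by simp
      have [measurable]: "(\<lambda>s. s i) \<in> S \<rightarrow>\<^sub>M PZ" unfolding S_def by measurable
      show "integrable S (\<lambda>s. indicator A (s i) * measure (K s) B)"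
      proof (rule intb[where B=1])
        show "(\<lambda>s. indicator A (s i) * measure (K s) B) \<in> borel_measurable S" using A by measurable
        fix s assume s: "s \<in> space S"
        interpret Ks: prob_space "K s" using kernel_space(1)[OF K' s] .
        show "\<bar>indicator A (s i) * measure (K s) B\<bar> \<le> 1" by (simp add: indicator_def Ks.prob_le_1)
      qed (simp add: S.finite_measure_axioms)
    qed (simp add: indicator_def)
    finally show ?thesis .
  qed
  have rect2: "emeasure \<nu>2 (B \<times> A) = ennreal (\<integral>z. indicator A z * measure (\<kappa> z) B \<partial>PZ)"
    if A: "A \<in> sets PZ" and B: "B \<in> sets W" for A B
  proof -
    have BA: "B \<times> A \<in> sets N" unfolding N_def using A B by simp
    have "emeasure \<nu>2 (B \<times> A) = (\<integral>\<^sup>+z. emeasure (k2 z) (B \<times> A) \<partial>PZ)"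
      unfolding \<nu>2_def by (rule emeasure_bind_prob_algebra[OF PZ_in k2m BA])
    also have "\<dots> = (\<integral>\<^sup>+z. ennreal (indicator A z * measure (\<kappa> z) B) \<partial>PZ)"
    proof (rule nn_integral_cong)
      fix z assume z: "z \<in> space PZ"
      interpret Kz: prob_space "\<kappa> z" using kernel_space(1)[OF \<kappa> z] .
      have spK: "space (\<kappa> z) = space W" using kernel_space(3)[OF \<kappa> z] .
      have mm: "(\<lambda>w. (w, z)) \<in> \<kappa> z \<rightarrow>\<^sub>M N"
        using measurable_Pair2'[OF z, of W] kernel_space(2)[OF \<kappa> z] by (simp add: N_def cong: measurable_cong_sets)
      have "emeasure (k2 z) (B \<times> A) = emeasure (\<kappa> z) ((\<lambda>w. (w, z)) -` (B \<times> A) \<inter> space (\<kappa> z))"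
        unfolding k2_def by (rule emeasure_distr[OF mm BA])
      also have "(\<lambda>w. (w, z)) -` (B \<times> A) \<inter> space (\<kappa> z) = (if z \<in> A then B else {})"
        using sets.sets_into_space[OF B] spK by auto
      finally show "emeasure (k2 z) (B \<times> A) = ennreal (indicator A z * measure (\<kappa> z) B)"
        by (simp add: Kz.emeasure_eq_measure indicator_def)
    qed
    also have "\<dots> = ennreal (\<integral>z. indicator A z * measure (\<kappa> z) B \<partial>PZ)"
    proof (rule nn_integral_eq_integral)
      have [measurable]: "(\<lambda>z. measure (\<kappa> z) B) \<in> borel_measurable PZ"
        by (rule measurable_compose[OF \<kappa> measurable_measure_prob_algebra[OF B]])
      show "integrable PZ (\<lambda>z. indicator A z * measure (\<kappa> z) B)"
      proof (rule intb[where B=1])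
        show "(\<lambda>z. indicator A z * measure (\<kappa> z) B) \<in> borel_measurable PZ" using A by measurable
        fix z assume z: "z \<in> space PZ"
        interpret Kz: prob_space "\<kappa> z" using kernel_space(1)[OF \<kappa> z] .
        show "\<bar>indicator A z * measure (\<kappa> z) B\<bar> \<le> 1" by (simp add: indicator_def Kz.prob_le_1)
      qed (simp add: PZ.finite_measure_axioms)
    qed (simp add: indicator_def)
    finally show ?thesis .
  qed
  have nu_eq: "\<nu>1 = \<nu>2"
  proof (rule measure_eqI_generator_eq[where E="{a \<times> b | a b. a \<in> sets W \<and> b \<in> sets PZ}"
        and \<Omega>="space W \<times> space PZ" and A="\<lambda>_. space W \<times> space PZ"])
    show "Int_stable {a \<times> b | a b. a \<in> sets W \<and> b \<in> sets PZ}" by (rule Int_stable_pair_measure_generator)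
    show "{a \<times> b | a b. a \<in> sets W \<and> b \<in> sets PZ} \<subseteq> Pow (space W \<times> space PZ)" by (rule pair_measure_closed)
    show "sets \<nu>1 = sigma_sets (space W \<times> space PZ) {a \<times> b | a b. a \<in> sets W \<and> b \<in> sets PZ}"
      using s1 by (simp add: N_def sets_pair_measure)
    show "sets \<nu>2 = sigma_sets (space W \<times> space PZ) {a \<times> b | a b. a \<in> sets W \<and> b \<in> sets PZ}"
      using s2 by (simp add: N_def sets_pair_measure)
    fix X assume "X \<in> {a \<times> b | a b. a \<in> sets W \<and> b \<in> sets PZ}"
    then obtain B A where X: "X = B \<times> A" "B \<in> sets W" "A \<in> sets PZ" by auto
    show "emeasure \<nu>1 X = emeasure \<nu>2 X"
      using rect1[OF X(3,2)] rect2[OF X(3,2)] cond[OF X(3,2)] X(1) by (simp add: S_def)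
  next
    show "range (\<lambda>_. space W \<times> space PZ) \<subseteq> {a \<times> b | a b. a \<in> sets W \<and> b \<in> sets PZ}" by auto
    show "(\<Union>i. space W \<times> space PZ) = space W \<times> space PZ" by simp
    fix j :: nat show "emeasure \<nu>1 (space W \<times> space PZ) \<noteq> \<infinity>"
    proof -
      interpret p1: prob_space \<nu>1 by (rule p1)
      show ?thesis using p1.emeasure_finite[of "space W \<times> space PZ"] by (simp add: top_ennreal_def)
    qed
  qed
  have Fbnd: "\<bar>(case p of (w, z) \<Rightarrow> F w z)\<bar> \<le> C" if "p \<in> space N" for p
    using that Fb by (auto simp: N_def space_pair_measure)
  have "(\<integral>p. (case p of (w, z) \<Rightarrow> F w z) \<partial>\<nu>1) = (\<integral>s. (\<integral>p. (case p of (w, z) \<Rightarrow> F w z) \<partial>k1 s) \<partial>S)"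
    unfolding \<nu>1_def
    by (rule integral_bind[OF FN Fbnd measurable_prob_algebraD[OF k1m] S.finite_measure_axioms, where B'=1])
       (auto intro!: AE_I2 dest!: measurable_space[OF k1m] simp: space_prob_algebra prob_space.emeasure_space_1)
  also have "\<dots> = (\<integral>s. (\<integral>w. F w (s i) \<partial>K s) \<partial>S)"
    by (rule Bochner_Integration.integral_cong) (auto simp: eq1)
  finally have I1: "(\<integral>p. (case p of (w, z) \<Rightarrow> F w z) \<partial>\<nu>1) = (\<integral>s. (\<integral>w. F w (s i) \<partial>K s) \<partial>S)" .
  have "(\<integral>p. (case p of (w, z) \<Rightarrow> F w z) \<partial>\<nu>2) = (\<integral>z. (\<integral>p. (case p of (w, z) \<Rightarrow> F w z) \<partial>k2 z) \<partial>PZ)"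
    unfolding \<nu>2_def
    by (rule integral_bind[OF FN Fbnd measurable_prob_algebraD[OF k2m] PZ.finite_measure_axioms, where B'=1])
       (auto intro!: AE_I2 dest!: measurable_space[OF k2m] simp: space_prob_algebra prob_space.emeasure_space_1)
  also have "\<dots> = (\<integral>z. (\<integral>w. F w z \<partial>\<kappa> z) \<partial>PZ)"
    by (rule Bochner_Integration.integral_cong) (auto simp: eq2)
  finally have I2: "(\<integral>p. (case p of (w, z) \<Rightarrow> F w z) \<partial>\<nu>2) = (\<integral>z. (\<integral>w. F w z \<partial>\<kappa> z) \<partial>PZ)" .
  show "(\<integral>s. (\<integral>w. F w (s i) \<partial>K s) \<partial>(PiM {..<n} (\<lambda>_. PZ))) = (\<integral>z. (\<integral>w. F w z \<partial>\<kappa> z) \<partial>PZ)"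
    using I1 I2 nu_eq by (simp add: S_def)
qed

lemma Psi_le_1: "Psi x \<le> 1"
proof (cases "x = \<infinity>")
  case False
  have "min (real_of_ereal x / 2) (1 - exp (- real_of_ereal x)) \<le> 1"
    by (simp add: min_le_iff_disj)
  then have "sqrt (min (real_of_ereal x / 2) (1 - exp (- real_of_ereal x))) \<le> sqrt 1"
    by (rule real_sqrt_le_mono)
  then show ?thesis using False by (simp add: Psi_def)
qed (simp add: Psi_def)

lemma abs_integral_le_const:
  fixes f :: "'a \<Rightarrow> real"
  assumes "prob_space M" "f \<in> borel_measurable M" "\<And>x. x \<in> space M \<Longrightarrow> \<bar>f x\<bar> \<le> B"
  shows "\<bar>\<integral>x. f x \<partial>M\<bar> \<le> B"
proof -
  interpret prob_space M by fact
  have i: "integrable M f" by (rule intb[OF finite_measure_axioms assms(2,3)])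
  have "\<bar>\<integral>x. f x \<partial>M\<bar> \<le> (\<integral>x. \<bar>f x\<bar> \<partial>M)" by (rule integral_abs_bound)
  also have "\<dots> \<le> (\<integral>x. B \<partial>M)" by (rule integral_mono) (use i assms(3) in auto)
  finally show ?thesis by (simp add: prob_space)
qed

theorem corollary1:
  fixes PZ :: "'z measure"
    and K :: "(nat \<Rightarrow> 'z) \<Rightarrow> 'w::polish_space measure"
    and loss :: "'w \<Rightarrow> 'z \<Rightarrow> real"
    and n :: nat and L a b :: real
    and \<kappa> :: "nat \<Rightarrow> 'z \<Rightarrow> 'w measure"
  assumes PZ: "prob_space PZ"
    and n_pos: "n > 0"
    and K_kernel: "K \<in> measurable (PiM {..<n} (\<lambda>_. PZ)) (prob_algebra (borel :: 'w measure))"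
    and loss_meas: "(\<lambda>(w, z). loss w z) \<in> borel_measurable ((borel :: 'w measure) \<Otimes>\<^sub>M PZ)"
    and lipschitz: "\<And>z. z \<in> space PZ \<Longrightarrow> L-lipschitz_on UNIV (\<lambda>w. loss w z)"
    and bounded: "\<And>w z. z \<in> space PZ \<Longrightarrow> loss w z \<in> {a..b}"
    and cond_kernel: "\<And>i. i < n \<Longrightarrow> \<kappa> i \<in> measurable PZ (prob_algebra (borel :: 'w measure))"
    and cond_law: "\<And>i A B. i < n \<Longrightarrow> A \<in> sets PZ \<Longrightarrow> B \<in> sets (borel :: 'w measure) \<Longrightarrow>
        (\<integral>s. indicator A (s i) * measure (K s) B \<partial>(PiM {..<n} (\<lambda>_. PZ)))
          = (\<integral>z. indicator A z * measure (\<kappa> i z) B \<partial>PZ)"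
  shows "\<bar>exp_gen loss PZ n K\<bar>
           \<le> (b - a) / real n * (\<Sum>i<n. \<integral>z. tv_dist (\<kappa> i z) (PiM {..<n} (\<lambda>_. PZ) \<bind> K) \<partial>PZ)
       \<and> (b - a) / real n * (\<Sum>i<n. \<integral>z. tv_dist (\<kappa> i z) (PiM {..<n} (\<lambda>_. PZ) \<bind> K) \<partial>PZ)
           \<le> (b - a) / real n * (\<Sum>i<n. \<integral>z. Psi (rel_entropy (\<kappa> i z) (PiM {..<n} (\<lambda>_. PZ) \<bind> K)) \<partial>PZ)"
proof -
  interpret PZ: prob_space PZ by (rule PZ)
  define S where "S = PiM {..<n} (\<lambda>_. PZ)"
  interpret S: prob_space S unfolding S_def by (intro prob_space_PiM PZ)
  define Q where "Q = S \<bind> K"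
  have K': "K \<in> S \<rightarrow>\<^sub>M prob_algebra borel" using K_kernel by (simp add: S_def)
  have S_in: "S \<in> space (prob_algebra S)" by (simp add: space_prob_algebra S.prob_space_axioms)
  have Qp: "prob_space Q" unfolding Q_def by (rule prob_space_bind'[OF S_in K'])
  have Qs: "sets Q = sets borel" unfolding Q_def by (rule sets_bind'[OF S_in K'])
  interpret Q: prob_space Q by (rule Qp)
  define C where "C = \<bar>a\<bar> + \<bar>b\<bar>"
  have lb: "\<bar>loss w z\<bar> \<le> C" if "z \<in> space PZ" for w z
    using bounded[OF that, of w] unfolding C_def by auto
  obtain z0 where z0: "z0 \<in> space PZ" using PZ.not_empty by blast
  have ab: "a \<le> b" using bounded[OF z0, of undefined] by simp
  have [measurable]: "(\<lambda>(w, z). loss w z) \<in> borel_measurable (borel \<Otimes>\<^sub>M PZ)" by (rule loss_meas)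
  have lossQ[measurable]: "(\<lambda>(w, z). loss w z) \<in> borel_measurable (Q \<Otimes>\<^sub>M PZ)"
    using loss_meas Qs by (simp cong: measurable_cong_sets)
  have lw[measurable]: "(\<lambda>w. loss w z) \<in> borel_measurable borel" if "z \<in> space PZ" for z
    using measurable_compose[OF measurable_Pair2'[OF that, of borel] loss_meas] by simp
  have lwM: "(\<lambda>w. loss w z) \<in> borel_measurable M" if "z \<in> space PZ" "sets M = sets borel" for z M
    using lw[OF that(1)] that(2) by (simp cong: measurable_cong_sets)
  have Ks: "prob_space (K s)" "sets (K s) = sets borel" if "s \<in> space S" for s
    using kernel_space[OF K' that] by auto
  have \<kappa>s: "prob_space (\<kappa> i z)" "sets (\<kappa> i z) = sets borel" if "i < n" "z \<in> space PZ" for i z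
    using kernel_space[OF cond_kernel[OF that(1)] that(2)] by auto
  define pop where "pop w = (\<integral>z. loss w z \<partial>PZ)" for w
  have pop_meas[measurable]: "pop \<in> borel_measurable borel"
    unfolding pop_def by (rule PZ.borel_measurable_lebesgue_integral) (use loss_meas in simp)
  have pop_b: "\<bar>pop w\<bar> \<le> C" for w
    unfolding pop_def
  proof (rule abs_integral_le_const[OF PZ])
    show "(\<lambda>z. loss w z) \<in> borel_measurable PZ"
      using measurable_compose[OF measurable_Pair1'[of w borel PZ] loss_meas] by simp
  qed (use lb in auto)
  have JL1: "(\<integral>s. (\<integral>w. loss w (s i) \<partial>K s) \<partial>S) = (\<integral>z. (\<integral>w. loss w z \<partial>\<kappa> i z) \<partial>PZ)" if i: "i < n" for i
    unfolding S_def by (rule joint_law(1)[OF PZ K_kernel cond_kernel[OF i] i cond_law[OF i] loss_meas lb])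
  have JL2: "(\<lambda>s. \<integral>w. loss w (s i) \<partial>K s) \<in> borel_measurable S" if i: "i < n" for i
    unfolding S_def by (rule joint_law(2)[OF PZ K_kernel cond_kernel[OF i] i cond_law[OF i] loss_meas lb])
  have JL3: "(\<lambda>z. \<integral>w. loss w z \<partial>\<kappa> i z) \<in> borel_measurable PZ" if i: "i < n" for i
    by (rule joint_law(3)[OF PZ K_kernel cond_kernel[OF i] i cond_law[OF i] loss_meas lb])
  define J where "J i s = (\<integral>w. loss w (s i) \<partial>K s)" for i s
  have sK: "s i \<in> space PZ" if "s \<in> space S" "i < n" for s i
    using that by (auto simp: S_def space_PiM)
  have inner: "(\<integral>w. pop_risk loss PZ w - emp_risk loss n s w \<partial>K s)
      = (\<integral>w. pop w \<partial>K s) - (\<Sum>i<n. J i s) / real n" if s: "s \<in> space S" for s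
  proof -
    interpret Ks: prob_space "K s" using Ks(1)[OF s] .
    have ip: "integrable (K s) pop"
      by (rule intb[where B=C]) (use pop_b Ks(2)[OF s] in \<open>auto simp: Ks.finite_measure_axioms cong: measurable_cong_sets\<close>)
    have il: "integrable (K s) (\<lambda>w. loss w (s i))" if "i < n" for i
      by (rule intb[where B=C]) (use lb sK[OF s that] lwM[OF sK[OF s that] Ks(2)[OF s]] in \<open>auto simp: Ks.finite_measure_axioms\<close>)
    have isum: "integrable (K s) (\<lambda>w. (\<Sum>i<n. loss w (s i)) / real n)"
      by (intro integrable_divide_zero integrable_sum) (use il in auto)
    have "(\<integral>w. pop_risk loss PZ w - emp_risk loss n s w \<partial>K s)
        = (\<integral>w. pop w - (\<Sum>i<n. loss w (s i)) / real n \<partial>K s)"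
      by (simp add: pop_risk_def emp_risk_def pop_def)
    also have "\<dots> = (\<integral>w. pop w \<partial>K s) - (\<integral>w. (\<Sum>i<n. loss w (s i)) / real n \<partial>K s)"
      by (rule Bochner_Integration.integral_diff[OF ip isum])
    also have "(\<integral>w. (\<Sum>i<n. loss w (s i)) / real n \<partial>K s) = (\<Sum>i<n. J i s) / real n"
      using il by (simp add: J_def integral_sum)
    finally show ?thesis .
  qed
  have Jb: "\<bar>J i s\<bar> \<le> C" if "s \<in> space S" "i < n" for i s
    unfolding J_def by (rule abs_integral_le_const[OF Ks(1)[OF that(1)] lwM[OF sK[OF that] Ks(2)[OF that(1)]]])
      (use lb sK[OF that] Ks(2)[OF that(1)] in \<open>auto dest: sets_eq_imp_space_eq\<close>)
  have iJ: "integrable S (J i)" if "i < n" for i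
    unfolding J_def by (rule intb[where B=C]) (use JL2[OF that] Jb[unfolded J_def] that in \<open>auto simp: S.finite_measure_axioms\<close>)
  have popK_meas: "(\<lambda>s. \<integral>w. pop w \<partial>K s) \<in> borel_measurable S"
    by (rule measurable_compose[OF measurable_prob_algebraD[OF K'] integral_measurable_subprob_algebra[OF pop_meas]])
  have popKb: "\<bar>\<integral>w. pop w \<partial>K s\<bar> \<le> C" if "s \<in> space S" for s
    by (rule abs_integral_le_const[OF Ks(1)[OF that]]) (use pop_b Ks(2)[OF that] in \<open>auto cong: measurable_cong_sets\<close>)
  have ipop: "integrable S (\<lambda>s. \<integral>w. pop w \<partial>K s)"
    by (rule intb[where B=C]) (use popK_meas popKb in \<open>auto simp: S.finite_measure_axioms\<close>)
  have gen1: "exp_gen loss PZ n K = (\<integral>s. (\<integral>w. pop w \<partial>K s) \<partial>S) - (\<Sum>i<n. \<integral>s. J i s \<partial>S) / real n"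
  proof -
    have "exp_gen loss PZ n K = (\<integral>s. (\<integral>w. pop w \<partial>K s) - (\<Sum>i<n. J i s) / real n \<partial>S)"
      unfolding exp_gen_def S_def[symmetric] by (rule Bochner_Integration.integral_cong) (auto simp: inner)
    also have "\<dots> = (\<integral>s. (\<integral>w. pop w \<partial>K s) \<partial>S) - (\<integral>s. (\<Sum>i<n. J i s) / real n \<partial>S)"
      by (rule Bochner_Integration.integral_diff[OF ipop]) (intro integrable_divide_zero integrable_sum, use iJ in auto)
    also have "(\<integral>s. (\<Sum>i<n. J i s) / real n \<partial>S) = (\<Sum>i<n. \<integral>s. J i s \<partial>S) / real n"
      using iJ by (simp add: integral_sum)
    finally show ?thesis .
  qed
  have bindpop: "(\<integral>s. (\<integral>w. pop w \<partial>K s) \<partial>S) = (\<integral>w. pop w \<partial>Q)"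
    unfolding Q_def
    by (rule integral_bind[OF pop_meas _ measurable_prob_algebraD[OF K'] S.finite_measure_axioms, where B=C and B'=1, symmetric])
       (use pop_b in \<open>auto intro!: AE_I2 dest: Ks(1) simp: prob_space.emeasure_space_1\<close>)
  define A where "A z = (\<integral>w. loss w z \<partial>Q)" for z
  have fub: "(\<integral>w. pop w \<partial>Q) = (\<integral>z. A z \<partial>PZ)"
  proof -
    interpret QZ: pair_sigma_finite Q PZ by unfold_locales
    have "integrable (Q \<Otimes>\<^sub>M PZ) (\<lambda>(w, z). loss w z)"
    proof (rule intb[where B=C])
      show "finite_measure (Q \<Otimes>\<^sub>M PZ)" using prob_space_pair[OF Qp PZ] by (simp add: prob_space_def)
    qed (use lb in \<open>auto simp: space_pair_measure\<close>)
    then have "(\<integral>z. (\<integral>w. loss w z \<partial>Q) \<partial>PZ) = (\<integral>w. (\<integral>z. loss w z \<partial>PZ) \<partial>Q)"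
      by (rule QZ.Fubini_integral)
    then show ?thesis by (simp add: A_def pop_def)
  qed
  have A_meas: "A \<in> borel_measurable PZ"
  proof -
    have "(\<lambda>(z, w). loss w z) \<in> borel_measurable (PZ \<Otimes>\<^sub>M Q)"
      using lossQ by (subst measurable_pair_swap_iff) simp
    then show ?thesis unfolding A_def using Q.borel_measurable_lebesgue_integral[of "\<lambda>z w. loss w z" PZ] by simp
  qed
  have Ab: "\<bar>A z\<bar> \<le> C" if "z \<in> space PZ" for z
    unfolding A_def by (rule abs_integral_le_const[OF Qp lwM[OF that Qs]]) (use lb that in auto)
  have iA: "integrable PZ A" by (rule intb[where B=C]) (use A_meas Ab in \<open>auto simp: PZ.finite_measure_axioms\<close>)
  define B where "B i z = (\<integral>w. loss w z \<partial>\<kappa> i z)" for i z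
  have Bb: "\<bar>B i z\<bar> \<le> C" if "z \<in> space PZ" "i < n" for i z
    unfolding B_def by (rule abs_integral_le_const[OF \<kappa>s(1)[OF that(2,1)] lwM[OF that(1) \<kappa>s(2)[OF that(2,1)]]])
      (use lb that \<kappa>s(2)[OF that(2,1)] in \<open>auto dest: sets_eq_imp_space_eq\<close>)
  have iB: "integrable PZ (B i)" if "i < n" for i
    unfolding B_def by (rule intb[where B=C]) (use JL3[OF that] Bb[unfolded B_def] that in \<open>auto simp: PZ.finite_measure_axioms\<close>)
  define h where "h i z = A z - B i z" for i z
  have ih: "integrable PZ (h i)" if "i < n" for i unfolding h_def using iA iB[OF that] by auto
  have gen2: "exp_gen loss PZ n K = (\<Sum>i<n. \<integral>z. h i z \<partial>PZ) / real n"
  proof -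
    have "exp_gen loss PZ n K = (\<integral>z. A z \<partial>PZ) - (\<Sum>i<n. \<integral>z. B i z \<partial>PZ) / real n"
    proof -
      have "(\<Sum>i<n. \<integral>s. J i s \<partial>S) = (\<Sum>i<n. \<integral>z. B i z \<partial>PZ)"
        by (rule sum.cong) (auto simp: J_def B_def JL1)
      then show ?thesis unfolding gen1 bindpop fub by simp
    qed
    also have "(\<integral>z. A z \<partial>PZ) = (\<Sum>i<n. \<integral>z. A z \<partial>PZ) / real n" using n_pos by simp
    also have "(\<Sum>i<n. \<integral>z. A z \<partial>PZ) / real n - (\<Sum>i<n. \<integral>z. B i z \<partial>PZ) / real n
        = (\<Sum>i<n. (\<integral>z. A z \<partial>PZ) - (\<integral>z. B i z \<partial>PZ)) / real n"
      by (simp add: sum_subtractf diff_divide_distrib)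
    also have "\<dots> = (\<Sum>i<n. \<integral>z. h i z \<partial>PZ) / real n"
      using iA iB by (intro arg_cong[where f="\<lambda>x. x / real n"] sum.cong) (auto simp: h_def)
    finally show ?thesis .
  qed
  define T where "T i z = tv_dist (\<kappa> i z) Q" for i z
  have hb: "\<bar>h i z\<bar> \<le> (b - a) * T i z" if z: "z \<in> space PZ" and i: "i < n" for i z
  proof -
    have sq: "sets (\<kappa> i z) = sets Q" using \<kappa>s(2)[OF i z] Qs by simp
    have g: "(\<lambda>w. loss w z) \<in> borel_measurable (\<kappa> i z)" by (rule lwM[OF z \<kappa>s(2)[OF i z]])
    have sp: "space (\<kappa> i z) = space borel" using \<kappa>s(2)[OF i z] by (rule sets_eq_imp_space_eq)
    have 1: "B i z - A z \<le> (b - a) * T i z"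
      using int_diff_le_tv[OF \<kappa>s(1)[OF i z] Qp sq g, of a b] bounded[OF z]
      by (simp add: A_def B_def T_def)
    have g': "(\<lambda>w. - loss w z) \<in> borel_measurable (\<kappa> i z)" using g by simp
    have 2: "(\<integral>w. - loss w z \<partial>\<kappa> i z) - (\<integral>w. - loss w z \<partial>Q) \<le> (- a - (- b)) * T i z"
      using int_diff_le_tv[OF \<kappa>s(1)[OF i z] Qp sq g', of "- b" "- a"] bounded[OF z]
      by (simp add: T_def)
    then have "A z - B i z \<le> (b - a) * T i z" by (simp add: A_def B_def)
    with 1 show ?thesis by (simp add: h_def)
  qed
  have T_meas: "T i \<in> borel_measurable PZ" if "i < n" for i
    unfolding T_def by (rule meas_tv[OF cond_kernel[OF that] Qp Qs])
  have T01: "0 \<le> T i z \<and> T i z \<le> 1" if "z \<in> space PZ" "i < n" for i z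
    using tv_nonneg[OF \<kappa>s(1)[OF that(2,1)] Qp] tv_le_1[OF \<kappa>s(1)[OF that(2,1)] Qp] by (simp add: T_def)
  have iT: "integrable PZ (T i)" if "i < n" for i
    by (rule intb[where B=1]) (use T_meas[OF that] T01 that in \<open>auto simp: PZ.finite_measure_axioms\<close>)
  define Ps where "Ps i z = Psi (rel_entropy (\<kappa> i z) Q)" for i z
  have Ps_meas: "Ps i \<in> borel_measurable PZ" if "i < n" for i
    unfolding Ps_def by (rule meas_Psi_re[OF cond_kernel[OF that] Qp Qs])
  have TPs: "T i z \<le> Ps i z" if "z \<in> space PZ" "i < n" for i z
    unfolding T_def Ps_def by (rule tv_le_Psi[OF \<kappa>s(1)[OF that(2,1)] Qp]) (use \<kappa>s(2)[OF that(2,1)] Qs in simp)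
  have Ps01: "\<bar>Ps i z\<bar> \<le> 1" if "z \<in> space PZ" "i < n" for i z
    using TPs[OF that] T01[OF that] Psi_le_1 by (simp add: Ps_def)
  have iPs: "integrable PZ (Ps i)" if "i < n" for i
    by (rule intb[where B=1]) (use Ps_meas[OF that] Ps01 that in \<open>auto simp: PZ.finite_measure_axioms\<close>)
  have c0: "(b - a) / real n \<ge> 0" using ab by simp
  have part1: "\<bar>exp_gen loss PZ n K\<bar> \<le> (b - a) / real n * (\<Sum>i<n. \<integral>z. T i z \<partial>PZ)"
  proof -
    have "\<bar>exp_gen loss PZ n K\<bar> = \<bar>\<Sum>i<n. \<integral>z. h i z \<partial>PZ\<bar> / real n" by (simp add: gen2)
    also have "\<dots> \<le> (\<Sum>i<n. \<bar>\<integral>z. h i z \<partial>PZ\<bar>) / real n"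
      by (intro divide_right_mono sum_abs) simp
    also have "\<dots> \<le> (\<Sum>i<n. (b - a) * (\<integral>z. T i z \<partial>PZ)) / real n"
    proof (intro divide_right_mono sum_mono)
      fix i assume "i \<in> {..<n}"
      then have i: "i < n" by simp
      have "\<bar>\<integral>z. h i z \<partial>PZ\<bar> \<le> (\<integral>z. \<bar>h i z\<bar> \<partial>PZ)" by (rule integral_abs_bound)
      also have "\<dots> \<le> (\<integral>z. (b - a) * T i z \<partial>PZ)"
        by (rule integral_mono) (use ih[OF i] iT[OF i] hb i in auto)
      also have "\<dots> = (b - a) * (\<integral>z. T i z \<partial>PZ)" by simp
      finally show "\<bar>\<integral>z. h i z \<partial>PZ\<bar> \<le> (b - a) * (\<integral>z. T i z \<partial>PZ)" .
    qed simp
    also have "\<dots> = (b - a) / real n * (\<Sum>i<n. \<integral>z. T i z \<partial>PZ)"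
      by (simp add: sum_distrib_left sum_divide_distrib)
    finally show ?thesis .
  qed
  have part2: "(b - a) / real n * (\<Sum>i<n. \<integral>z. T i z \<partial>PZ) \<le> (b - a) / real n * (\<Sum>i<n. \<integral>z. Ps i z \<partial>PZ)"
  proof (intro mult_left_mono[OF _ c0] sum_mono)
    fix i assume "i \<in> {..<n}"
    then have i: "i < n" by simp
    show "(\<integral>z. T i z \<partial>PZ) \<le> (\<integral>z. Ps i z \<partial>PZ)"
      by (rule integral_mono) (use iT[OF i] iPs[OF i] TPs i in auto)
  qed
  show ?thesis using part1 part2 by (simp add: T_def Ps_def Q_def S_def)
qed

end
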